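(* In the finite-sum setting, run Algorithm LCSVRG with $\gamma,\beta$ such that $\beta\in(0,2\gamma-L_0)$ and $\tilde L:=\frac{2\gamma-\beta-L_0}{2}-\frac{L_0^2(T-1)}{2\beta b}>0$, with $b\ge2T$, and suppose there is $B>0$ with $\|\lambda^{k+1}\|\le B$ for all $k$ and all realizations, where $\lambda^{k+1}$ are Lagrange multipliers of the subproblems. Let $K=r_0T+j_0$ with $r_0\ge0$, $0\le j_0<T$, and let $\{\alpha_k\}$ be nonnegative, nondecreasing and constant on each epoch, i.e. $\alpha_{rT+j}=\alpha_{rT}$ for $j=1,\dots,T-1$. With $D=\sqrt{(\psi_0(x^0)-\psi_0^* )/L_0}$, $$\sum_{k=0}^K\alpha_k\mathbb{E}\|\partial_x\mathcal{L}(x^{k+1},\lambda^{k+1})\|_-^2\le8\tilde L^{-1}L_0(\gamma+L_0+B\|L\|)^2D^2\alpha_{r_0T},$$ $$\sum_{k=0}^K\alpha_k\mathbb{E}\langle\lambda^{k+1},|\psi(x^{k+1})-\eta|\rangle\le B\sum_{k=0}^K\alpha_k\|\eta-\eta^k\|+B\tilde L^{-1}\|L\|L_0D^2\alpha_{r_0T}.$$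
   Context: Problem (P): minimize $\psi_0(x):=f_0(x)+\chi_0(x)$ over $x\in\mathbb{R}^d$ subject to $\psi_i(x):=f_i(x)+\chi_i(x)\le\eta_i$, $i\in[m]:=\{1,\dots,m\}$, with $\chi_0$ proper convex lsc, $\chi_i$ convex continuous on $\mathrm{dom}\,\chi_0$, $f_i$ with $L_i$-Lipschitz gradients ($i=0,\dots,m$), $L=(L_1,\dots,L_m)^\top$, finite optimal value $\psi_0^*$, and nonempty compact feasible set; $\psi=(\psi_1,\dots,\psi_m)^\top$; vector inequalities and $|\cdot|$ componentwise. Subdifferential $\partial\psi_i(x):=\nabla f_i(x)+\partial\chi_i(x)$; $\mathcal{L}(x,\lambda)=\psi_0(x)+\sum_i\lambda_i(\psi_i(x)-\eta_i)$, $\partial_x\mathcal{L}(x,\lambda)=\partial\psi_0(x)+\sum_i\lambda_i\partial\psi_i(x)$; $\|S\|_-:=\inf\{\|s\|:s\in S\}$. Finite-sum setting: $f_0(x)=\frac1n\sum_{j=1}^nF(x,\xi_j)$ where each $F(\cdot,\xi_j)$ has $L_0$-Lipschitz gradient. Algorithm LCSVRG: given $x^0\in\mathrm{dom}\,\chi_0$, $\eta^0$ with $\psi(x^0)<\eta^0<\eta$, epoch length $T$, batch size $b$, $\gamma>0$. At step $k$: if $k$ is a multiple of $T$, set $G^k=\nabla f_0(x^k)$; otherwise draw a mini-batch $B_k$ of $b$ indices independently and uniformly from $\{1,\dots,n\}$ and set $G^k=\frac1b\sum_{j\in B_k}[\nabla F(x^k,\xi_j)-\nabla F(x^{k-1},\xi_j)]+G^{k-1}$.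 Set $\psi_0^k(x)=\langle G^k,x\rangle+\frac{\gamma}{2}\|x-x^k\|^2+\chi_0(x)$, $\psi_i^k(x)=f_i(x^k)+\langle\nabla f_i(x^k),x-x^k\rangle+\frac{L_i}{2}\|x-x^k\|^2+\chi_i(x)$ ($i\in[m]$), let $x^{k+1}$ minimize $\psi_0^k$ subject to $\psi_i^k(x)\le\eta_i^k$, $i\in[m]$, and set $\eta^{k+1}=\eta^k+\delta^k$ with $\delta^k>0$, $\eta^{k+1}<\eta$. A Lagrange multiplier $\lambda^{k+1}\in\mathbb{R}^m_+$ satisfies $0\in\partial\psi_0^k(x^{k+1})+\sum_i\lambda_i^{k+1}\partial\psi_i^k(x^{k+1})$ and $\lambda_i^{k+1}(\psi_i^k(x^{k+1})-\eta_i^k)=0$. *)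

theory Defs
  imports "HOL-Analysis.Analysis" "HOL-Probability.Probability"
begin

definition edom :: "('a \<Rightarrow> ereal) \<Rightarrow> 'a set" where
  "edom h = {x. h x < \<infinity>}"

definition proper_fun :: "('a \<Rightarrow> ereal) \<Rightarrow> bool" where
  "proper_fun h \<longleftrightarrow> (\<forall>x. h x \<noteq> -\<infinity>) \<and> (\<exists>x. h x < \<infinity>)"

definition econvex :: "('a::real_vector \<Rightarrow> ereal) \<Rightarrow> bool" where
  "econvex h \<longleftrightarrow> (\<forall>x y (t::real). 0 < t \<and> t < 1 \<longrightarrow>
      h ((1 - t) *\<^sub>R x + t *\<^sub>R y) \<le> ereal (1 - t) * h x + ereal t * h y)"

definition elsc :: "('a::topological_space \<Rightarrow> ereal) \<Rightarrow> bool" where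
  "elsc h \<longleftrightarrow> (\<forall>x. h x \<le> Liminf (at x) h)"

definition csubdiff :: "('a::real_inner \<Rightarrow> ereal) \<Rightarrow> 'a \<Rightarrow> 'a set" where
  "csubdiff h x = {s. h x < \<infinity> \<and> (\<forall>y. h x + ereal (s \<bullet> (y - x)) \<le> h y)}"

text \<open>Subdifferential of a composite function: gradient of the smooth part plus
  convex subdifferential of the nonsmooth part.\<close>
definition comp_subdiff :: "'a::real_inner \<Rightarrow> ('a \<Rightarrow> ereal) \<Rightarrow> 'a \<Rightarrow> 'a set" where
  "comp_subdiff g h x = (\<lambda>s. g + s) ` csubdiff h x"

definition lag_set :: "nat \<Rightarrow> 'a::real_vector set \<Rightarrow> (nat \<Rightarrow> 'a set) \<Rightarrow> (nat \<Rightarrow> real) \<Rightarrow> 'a set" where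
  "lag_set m S0 S lam = {g0 + (\<Sum>i\<in>{1..m}. lam i *\<^sub>R g i) | g0 g. g0 \<in> S0 \<and> (\<forall>i\<in>{1..m}. g i \<in> S i)}"

definition norm_minus :: "'a::real_normed_vector set \<Rightarrow> real" where
  "norm_minus S = Inf (norm ` S)"

definition batches :: "nat \<Rightarrow> nat \<Rightarrow> nat list set" where
  "batches n b = {xs. length xs = b \<and> set xs \<subseteq> {..<n}}"

text \<open>Distribution of the batch sequence for steps 0..K: i.i.d. uniform batches
  (each batch = b independent uniform indices); components beyond K are fixed.\<close>
definition batch_pmf :: "nat \<Rightarrow> nat \<Rightarrow> nat \<Rightarrow> (nat \<Rightarrow> nat list) pmf" where
  "batch_pmf n b K = Pi_pmf {..K} (replicate b 0) (\<lambda>_. pmf_of_set (batches n b))"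

definition lcsvrg_obj :: "'a::real_inner \<Rightarrow> real \<Rightarrow> 'a \<Rightarrow> ('a \<Rightarrow> ereal) \<Rightarrow> 'a \<Rightarrow> ereal" where
  "lcsvrg_obj Gk \<gamma> xk chi0 y = ereal (Gk \<bullet> y + \<gamma> / 2 * (norm (y - xk))\<^sup>2) + chi0 y"

definition lcsvrg_con :: "(nat \<Rightarrow> 'a::real_inner \<Rightarrow> real) \<Rightarrow> (nat \<Rightarrow> 'a \<Rightarrow> 'a) \<Rightarrow> (nat \<Rightarrow> real)
    \<Rightarrow> (nat \<Rightarrow> 'a \<Rightarrow> ereal) \<Rightarrow> 'a \<Rightarrow> nat \<Rightarrow> 'a \<Rightarrow> ereal" where
  "lcsvrg_con f gf Lc chi xk i y =
     ereal (f i xk + gf i xk \<bullet> (y - xk) + Lc i / 2 * (norm (y - xk))\<^sup>2) + chi i y"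

definition is_constr_min :: "nat \<Rightarrow> ('a \<Rightarrow> ereal) \<Rightarrow> (nat \<Rightarrow> 'a \<Rightarrow> ereal) \<Rightarrow> (nat \<Rightarrow> real) \<Rightarrow> 'a \<Rightarrow> bool" where
  "is_constr_min m obj con eta y \<longleftrightarrow>
     (\<forall>i\<in>{1..m}. con i y \<le> ereal (eta i)) \<and>
     (\<forall>z. (\<forall>i\<in>{1..m}. con i z \<le> ereal (eta i)) \<longrightarrow> obj y \<le> obj z)"

end

theory Submission
  imports Defs
begin



lemma descent_two:
  fixes f :: "'a::real_inner \<Rightarrow> real"
  assumes der: "\<And>y. (f has_derivative (\<lambda>h. g y \<bullet> h)) (at y)"
    and lip: "\<And>y z. norm (g y - g z) \<le> L * norm (y - z)"
  shows "\<bar>f y - f x - g x \<bullet> (y - x)\<bar> \<le> L / 2 * (norm (y - x))\<^sup>2"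
proof -
  define h where "h = y - x"
  have D: "((\<lambda>t. f (x + t *\<^sub>R h)) has_real_derivative (g (x + t *\<^sub>R h) \<bullet> h)) (at t)" for t
  proof -
    have "((\<lambda>t. x + t *\<^sub>R h) has_derivative (\<lambda>t. t *\<^sub>R h)) (at t)"
      by (auto intro!: derivative_eq_intros)
    from has_derivative_compose[OF this der]
    have "((\<lambda>t. f (x + t *\<^sub>R h)) has_derivative (\<lambda>s. g (x + t *\<^sub>R h) \<bullet> (s *\<^sub>R h))) (at t)" .
    moreover have "(\<lambda>s. g (x + t *\<^sub>R h) \<bullet> (s *\<^sub>R h)) = (*) (g (x + t *\<^sub>R h) \<bullet> h)"
      by (auto simp: fun_eq_iff mult.commute)
    ultimately show ?thesis by (simp add: has_field_derivative_def)
  qed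
  have B: "\<bar>(g (x + t *\<^sub>R h) - g x) \<bullet> h\<bar> \<le> L * t * (norm h)\<^sup>2" if "0 \<le> t" for t
  proof -
    have "\<bar>(g (x + t *\<^sub>R h) - g x) \<bullet> h\<bar> \<le> norm (g (x + t *\<^sub>R h) - g x) * norm h"
      by (rule Cauchy_Schwarz_ineq2)
    also have "\<dots> \<le> (L * norm (t *\<^sub>R h)) * norm h"
      using lip[of "x + t *\<^sub>R h" x] by (intro mult_right_mono) auto
    also have "\<dots> = L * t * (norm h)\<^sup>2" using that by (simp add: power2_eq_square)
    finally show ?thesis .
  qed
  define c where "c = g x \<bullet> h"
  define q where "q = L / 2 * (norm h)\<^sup>2"
  have up: "(\<lambda>t. f (x + t *\<^sub>R h) - c * t - q * t\<^sup>2) 1 \<le> (\<lambda>t. f (x + t *\<^sub>R h) - c * t - q * t\<^sup>2) 0"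
  proof (rule DERIV_nonpos_imp_nonincreasing[of 0 1])
    fix t :: real assume t: "0 \<le> t" "t \<le> 1"
    have "((\<lambda>t. f (x + t *\<^sub>R h) - c * t - q * t\<^sup>2) has_real_derivative
           (g (x + t *\<^sub>R h) \<bullet> h - c - q * (2 * t))) (at t)"
      by (auto intro!: derivative_eq_intros D)
    moreover have "g (x + t *\<^sub>R h) \<bullet> h - c - q * (2 * t) \<le> 0"
      using B[OF t(1)] by (auto simp: c_def q_def inner_diff_left abs_le_iff mult_ac)
    ultimately show "\<exists>y. ((\<lambda>t. f (x + t *\<^sub>R h) - c * t - q * t\<^sup>2) has_real_derivative y) (at t) \<and> y \<le> 0"
      by blast
  qed simp
  have lo: "(\<lambda>t. f (x + t *\<^sub>R h) - c * t + q * t\<^sup>2) 0 \<le> (\<lambda>t. f (x + t *\<^sub>R h) - c * t + q * t\<^sup>2) 1"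
  proof (rule DERIV_nonneg_imp_nondecreasing[of 0 1])
    fix t :: real assume t: "0 \<le> t" "t \<le> 1"
    have "((\<lambda>t. f (x + t *\<^sub>R h) - c * t + q * t\<^sup>2) has_real_derivative
           (g (x + t *\<^sub>R h) \<bullet> h - c + q * (2 * t))) (at t)"
      by (auto intro!: derivative_eq_intros D)
    moreover have "g (x + t *\<^sub>R h) \<bullet> h - c + q * (2 * t) \<ge> 0"
      using B[OF t(1)] by (auto simp: c_def q_def inner_diff_left abs_le_iff mult_ac)
    ultimately show "\<exists>y. ((\<lambda>t. f (x + t *\<^sub>R h) - c * t + q * t\<^sup>2) has_real_derivative y) (at t) \<and> y \<ge> 0"
      by blast
  qed simp
  have "x + h = y" by (simp add: h_def)
  with up lo have "f y - g x \<bullet> (y - x) - L / 2 * (norm (y - x))\<^sup>2 \<le> f x" "f x \<le> f y - g x \<bullet> (y - x) + L / 2 * (norm (y - x))\<^sup>2"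
    by (simp_all add: c_def q_def h_def)
  then show ?thesis unfolding abs_le_iff by linarith
qed



lemma batches_0: "batches n 0 = {[]}"
  by (auto simp: batches_def)

lemma batches_Suc: "batches n (Suc b) = (\<lambda>(j,xs). j # xs) ` ({..<n} \<times> batches n b)"
  by (auto simp: batches_def length_Suc_conv image_iff)

lemma finite_batches: "finite (batches n b)"
proof -
  have "batches n b = {xs. set xs \<subseteq> {..<n} \<and> length xs = b}" by (auto simp: batches_def)
  thus ?thesis by (simp add: finite_lists_length_eq)
qed

lemma card_batches: "card (batches n b) = n ^ b"
proof -
  have "batches n b = {xs. set xs \<subseteq> {..<n} \<and> length xs = b}" by (auto simp: batches_def)
  thus ?thesis by (simp add: card_lists_length_eq)
qed

lemma sum_batches_Suc:
  "(\<Sum>s\<in>batches n (Suc b). h s) = (\<Sum>j<n. \<Sum>xs\<in>batches n b. h (j # xs))"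
proof -
  have inj: "inj_on (\<lambda>(j,xs). j # xs) ({..<n} \<times> batches n b)"
    by (auto simp: inj_on_def)
  show ?thesis
    unfolding batches_Suc sum.reindex[OF inj]
    by (simp add: sum.cartesian_product case_prod_unfold)
qed

lemma batch_sum_zero:
  fixes v :: "nat \<Rightarrow> 'a::real_vector"
  assumes "(\<Sum>j<n. v j) = 0"
  shows "(\<Sum>s\<in>batches n b. sum_list (map v s)) = 0"
proof (induction b)
  case 0 thus ?case by (simp add: batches_0)
next
  case (Suc b)
  have "(\<Sum>s\<in>batches n (Suc b). sum_list (map v s))
      = (\<Sum>j<n. \<Sum>xs\<in>batches n b. v j + sum_list (map v xs))"
    by (simp add: sum_batches_Suc)
  also have "\<dots> = (\<Sum>j<n. of_nat (card (batches n b)) *\<^sub>R v j) + (\<Sum>j<n. \<Sum>xs\<in>batches n b. sum_list (map v xs))"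
    by (simp add: sum.distrib sum_constant_scaleR)
  also have "\<dots> = 0" using Suc assms by (simp add: scaleR_sum_right[symmetric])
  finally show ?case .
qed

lemma batch_sum_sq:
  fixes v :: "nat \<Rightarrow> 'a::real_inner"
  assumes "(\<Sum>j<n. v j) = 0"
  shows "real n * (\<Sum>s\<in>batches n b. (norm (sum_list (map v s)))\<^sup>2)
           = real b * real n ^ b * (\<Sum>j<n. (norm (v j))\<^sup>2)"
proof (induction b)
  case 0 thus ?case by (simp add: batches_0)
next
  case (Suc b)
  let ?W = "\<lambda>xs. sum_list (map v xs)"
  have e: "(norm (v j + ?W xs))\<^sup>2 = (norm (v j))\<^sup>2 + 2 * (v j \<bullet> ?W xs) + (norm (?W xs))\<^sup>2" for j xs
    by (simp add: power2_norm_eq_inner inner_add_left inner_add_right inner_commute)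
  have "(\<Sum>s\<in>batches n (Suc b). (norm (?W s))\<^sup>2)
      = (\<Sum>j<n. \<Sum>xs\<in>batches n b. (norm (v j))\<^sup>2 + 2 * (v j \<bullet> ?W xs) + (norm (?W xs))\<^sup>2)"
    by (simp add: sum_batches_Suc e)
  also have "\<dots> = real (n ^ b) * (\<Sum>j<n. (norm (v j))\<^sup>2) + 2 * ((\<Sum>j<n. v j) \<bullet> (\<Sum>xs\<in>batches n b. ?W xs))
                 + real n * (\<Sum>xs\<in>batches n b. (norm (?W xs))\<^sup>2)"
  proof -
    have m: "(\<Sum>j<n. \<Sum>xs\<in>batches n b. (v j \<bullet> ?W xs)) = ((\<Sum>j<n. v j) \<bullet> (\<Sum>xs\<in>batches n b. ?W xs))"
      unfolding inner_sum_left inner_sum_right sum_distrib_left[symmetric] by (simp add: sum.swap[of _ "batches n b"])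
    show ?thesis
      by (simp add: sum.distrib card_batches m[symmetric] sum_distrib_left[symmetric] sum_distrib_right[symmetric])
  qed
  also have "\<dots> = real (n ^ b) * (\<Sum>j<n. (norm (v j))\<^sup>2) + real n * (\<Sum>xs\<in>batches n b. (norm (?W xs))\<^sup>2)"
    using assms by simp
  finally have "real n * (\<Sum>s\<in>batches n (Suc b). (norm (?W s))\<^sup>2)
     = real n * real (n ^ b) * (\<Sum>j<n. (norm (v j))\<^sup>2) + real n * (real n * (\<Sum>xs\<in>batches n b. (norm (?W xs))\<^sup>2))"
    by (simp add: algebra_simps)
  also have "\<dots> = real (Suc b) * real n ^ Suc b * (\<Sum>j<n. (norm (v j))\<^sup>2)"
    using Suc.IH by (simp add: algebra_simps)
  finally show ?case .
qed



lemma expectation_finite_sum: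
  fixes f :: "'a \<Rightarrow> real"
  assumes "finite (set_pmf p)"
  shows "measure_pmf.expectation p f = (\<Sum>a\<in>set_pmf p. f a * pmf p a)"
  by (rule integral_measure_pmf_real) (use assms in auto)

lemma expectation_pair_iter:
  fixes h :: "'a \<times> 'b \<Rightarrow> real"
  assumes fp: "finite (set_pmf p)" and fq: "finite (set_pmf q)"
  shows "measure_pmf.expectation (pair_pmf p q) h
         = measure_pmf.expectation q (\<lambda>f. measure_pmf.expectation p (\<lambda>y. h (y, f)))"
proof -
  have "measure_pmf.expectation (pair_pmf p q) h = (\<Sum>z\<in>set_pmf p \<times> set_pmf q. h z * pmf (pair_pmf p q) z)"
    using fp fq by (subst expectation_finite_sum) auto
  also have "\<dots> = (\<Sum>y\<in>set_pmf p. \<Sum>f\<in>set_pmf q. h (y, f) * (pmf p y * pmf q f))"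
    by (subst sum.cartesian_product) (auto intro!: sum.cong simp: pmf_pair)
  also have "\<dots> = (\<Sum>f\<in>set_pmf q. (\<Sum>y\<in>set_pmf p. h (y, f) * pmf p y) * pmf q f)"
    by (subst sum.swap) (simp add: sum_distrib_right mult.assoc)
  also have "\<dots> = measure_pmf.expectation q (\<lambda>f. measure_pmf.expectation p (\<lambda>y. h (y, f)))"
    using fp fq by (simp add: expectation_finite_sum)
  finally show ?thesis .
qed

lemma batches_ne: "0 < n \<Longrightarrow> replicate b 0 \<in> batches n b"
  by (auto simp: batches_def)

lemma set_batch_pmf:
  assumes "0 < n"
  shows "set_pmf (batch_pmf n b K) = PiE_dflt {..K} (replicate b 0) (\<lambda>_. batches n b)"
proof -
  have ne: "batches n b \<noteq> {}" using batches_ne[OF assms] by blast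
  show ?thesis unfolding batch_pmf_def
    by (subst set_Pi_pmf) (auto simp: ne finite_batches o_def)
qed

lemma finite_set_batch_pmf:
  assumes "0 < n"
  shows "finite (set_pmf (batch_pmf n b K))"
  by (simp add: set_batch_pmf[OF assms] finite_PiE_dflt finite_batches)

lemma batch_pmf_valid:
  assumes "0 < n" "w \<in> set_pmf (batch_pmf n b K)"
  shows "w k \<in> batches n b"
  using assms by (cases "k \<le> K") (auto simp: set_batch_pmf PiE_dflt_def batches_ne)

lemma resample:
  fixes g :: "(nat \<Rightarrow> nat list) \<Rightarrow> real"
  assumes n: "0 < n" and k: "k \<le> K"
  shows "measure_pmf.expectation (batch_pmf n b K) g
       = measure_pmf.expectation (batch_pmf n b K) (\<lambda>w. (\<Sum>s\<in>batches n b. g (w(k := s))) / real (card (batches n b)))"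
proof -
  let ?S = "batches n b"
  have ne: "?S \<noteq> {}" using batches_ne[OF n] by blast
  define A where "A = {..K} - {k}"
  have ins: "{..K} = insert k A" using k by (auto simp: A_def)
  define Q where "Q = Pi_pmf A (replicate b 0) (\<lambda>_. pmf_of_set ?S)"
  have P: "batch_pmf n b K = map_pmf (\<lambda>(y,f). f(k:=y)) (pair_pmf (pmf_of_set ?S) Q)"
    unfolding batch_pmf_def ins Q_def by (rule Pi_pmf_insert) (auto simp: A_def)
  have fQ: "finite (set_pmf Q)" unfolding Q_def
    by (rule finite_subset[OF set_Pi_pmf_subset'], simp add: A_def,
      rule finite_PiE_dflt) (auto simp: A_def ne finite_batches)
  have fS: "finite (set_pmf (pmf_of_set ?S))" using ne by (simp add: finite_batches)
  have L: "measure_pmf.expectation (batch_pmf n b K) h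
         = measure_pmf.expectation Q (\<lambda>f. (\<Sum>y\<in>?S. h (f(k:=y))) / real (card ?S))" for h :: "_ \<Rightarrow> real"
    unfolding P integral_map_pmf
    by (subst expectation_pair_iter[OF fS fQ]) (simp add: integral_pmf_of_set[OF ne finite_batches])
  have c: "real (card ?S) \<noteq> 0" using ne finite_batches by auto
  have "(\<Sum>y\<in>?S. (\<lambda>w. (\<Sum>s\<in>?S. g (w(k := s))) / real (card ?S)) (f(k:=y))) / real (card ?S)
        = (\<Sum>s\<in>?S. g (f(k := s))) / real (card ?S)" for f
    using c by simp
  then show ?thesis
    by (simp only: L[of g] L[of "\<lambda>w. (\<Sum>s\<in>?S. g (w(k := s))) / real (card ?S)"])
qed



lemma csubdiff_fin:
  assumes "s \<in> csubdiff h x" "proper_fun h"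
  shows "h x = ereal (real_of_ereal (h x))"
  using assms by (cases "h x") (auto simp: csubdiff_def proper_fun_def)

lemma csubdiff_ineq:
  assumes "s \<in> csubdiff h x" "proper_fun h" "h y < \<infinity>"
  shows "real_of_ereal (h x) + s \<bullet> (y - x) \<le> real_of_ereal (h y)"
proof -
  have hx: "h x = ereal (real_of_ereal (h x))" by (rule csubdiff_fin[OF assms(1,2)])
  have hy: "h y = ereal (real_of_ereal (h y))" using assms(2,3) by (cases "h y") (auto simp: proper_fun_def)
  have "h x + ereal (s \<bullet> (y - x)) \<le> h y" using assms(1) by (auto simp: csubdiff_def)
  then show ?thesis by (subst (asm) hx, subst (asm) hy) simp
qed

lemma proper_fin:
  assumes "proper_fun h" "h y < \<infinity>"
  shows "h y = ereal (real_of_ereal (h y))"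
  using assms by (cases "h y") (auto simp: proper_fun_def)

lemma econvex_mid:
  assumes "econvex h" "proper_fun h" "h y1 < \<infinity>" "h y2 < \<infinity>"
  shows "h ((1/2) *\<^sub>R y1 + (1/2) *\<^sub>R y2) \<le> ereal ((real_of_ereal (h y1) + real_of_ereal (h y2)) / 2)"
proof -
  have "h ((1 - 1/2) *\<^sub>R y1 + (1/2) *\<^sub>R y2) \<le> ereal (1 - 1/2) * h y1 + ereal (1/2) * h y2"
  proof -
    have "0 < (1/2::real) \<and> (1/2::real) < 1" by simp
    then show ?thesis using assms(1) unfolding econvex_def by blast
  qed
  also have "\<dots> = ereal ((real_of_ereal (h y1) + real_of_ereal (h y2)) / 2)"
    by (subst proper_fin[OF assms(2,3)], subst proper_fin[OF assms(2,4)]) (simp add: field_simps)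
  finally show ?thesis by simp
qed

lemma norm_mid_sq:
  fixes y1 y2 x :: "'a::real_inner"
  shows "(norm ((1/2) *\<^sub>R y1 + (1/2) *\<^sub>R y2 - x))\<^sup>2
       = ((norm (y1 - x))\<^sup>2 + (norm (y2 - x))\<^sup>2) / 2 - (norm (y1 - y2))\<^sup>2 / 4"
proof -
  have e: "(1/2) *\<^sub>R y1 + (1/2) *\<^sub>R y2 - x = (1/2) *\<^sub>R ((y1 - x) + (y2 - x))"
    by (simp add: algebra_simps) (simp add: scaleR_add_left[symmetric])
  have e2: "y1 - y2 = (y1 - x) - (y2 - x)" by simp
  show ?thesis unfolding e e2
    by (simp add: power2_norm_eq_inner inner_add_left inner_add_right inner_diff_left inner_diff_right
        inner_commute field_simps)
qed

lemma avg_aux: "\<And>A B Z b1 b2 e::real. A + b1 \<le> e \<Longrightarrow> B + b2 \<le> e \<Longrightarrow> Z \<le> (A + B) / 2 \<Longrightarrow> Z + (b1 + b2) / 2 \<le> e"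
  by (simp add: field_simps)


lemma con_mid_feas:
  fixes chi :: "nat \<Rightarrow> 'a::real_inner \<Rightarrow> ereal"
  assumes cv: "econvex (chi i)" "proper_fun (chi i)" "0 \<le> Lc i"
    and h1: "lcsvrg_con f gf Lc chi xk i y1 \<le> ereal e" "lcsvrg_con f gf Lc chi xk i y2 \<le> ereal e"
  shows "lcsvrg_con f gf Lc chi xk i ((1/2) *\<^sub>R y1 + (1/2) *\<^sub>R y2) \<le> ereal e"
proof -
  let ?z = "(1/2) *\<^sub>R y1 + (1/2) *\<^sub>R y2"
  have f1: "chi i y1 < \<infinity>" "chi i y2 < \<infinity>" using h1 by (auto simp: lcsvrg_con_def)
  define b1 where "b1 = real_of_ereal (chi i y1)"
  define b2 where "b2 = real_of_ereal (chi i y2)"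
  have B1: "chi i y1 = ereal b1" using proper_fin[OF cv(2) f1(1)] by (simp add: b1_def)
  have B2: "chi i y2 = ereal b2" using proper_fin[OF cv(2) f1(2)] by (simp add: b2_def)
  define p where "p = (\<lambda>y. f i xk + gf i xk \<bullet> (y - xk) + Lc i / 2 * (norm (y - xk))\<^sup>2)"
  have p1: "p y1 + b1 \<le> e" "p y2 + b2 \<le> e" using h1 by (simp_all add: lcsvrg_con_def B1 B2 p_def)
  have lin: "gf i xk \<bullet> (?z - xk) = (gf i xk \<bullet> (y1 - xk) + gf i xk \<bullet> (y2 - xk)) / 2"
  proof -
    have "?z - xk = (1/2) *\<^sub>R (y1 - xk) + (1/2) *\<^sub>R (y2 - xk)"
      by (simp add: algebra_simps) (simp add: scaleR_add_left[symmetric])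
    then show ?thesis by (simp add: inner_add_right)
  qed
  have pz: "p ?z \<le> (p y1 + p y2) / 2"
  proof -
    have "(norm (?z - xk))\<^sup>2 \<le> ((norm (y1 - xk))\<^sup>2 + (norm (y2 - xk))\<^sup>2) / 2"
      using norm_mid_sq[of y1 y2 xk] zero_le_power2[of "norm (y1 - y2)"] by linarith
    then have "Lc i / 2 * (norm (?z - xk))\<^sup>2 \<le> Lc i / 2 * (((norm (y1 - xk))\<^sup>2 + (norm (y2 - xk))\<^sup>2) / 2)"
      using cv(3) by (intro mult_left_mono) auto
    then show ?thesis unfolding p_def lin by (simp add: field_simps)
  qed
  have cz: "chi i ?z \<le> ereal ((b1 + b2) / 2)"
    using econvex_mid[OF cv(1,2) f1] by (simp add: b1_def b2_def)
  have "lcsvrg_con f gf Lc chi xk i ?z \<le> ereal (p ?z + (b1 + b2) / 2)"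
  proof -
    have "lcsvrg_con f gf Lc chi xk i ?z = ereal (p ?z) + chi i ?z" by (simp add: lcsvrg_con_def p_def)
    also have "\<dots> \<le> ereal (p ?z) + ereal ((b1 + b2) / 2)" using cz by (rule add_left_mono)
    finally show ?thesis by simp
  qed
  also have "\<dots> \<le> ereal e"
    using avg_aux[OF p1(1) p1(2) pz] by simp
  finally show ?thesis .
qed
lemma constr_min_unique:
  fixes chi :: "nat \<Rightarrow> 'a::real_inner \<Rightarrow> ereal"
  assumes gam: "0 < \<gamma>"
    and c0: "econvex (chi 0)" "proper_fun (chi 0)"
    and ci: "\<forall>i\<in>{1..m}. econvex (chi i) \<and> proper_fun (chi i) \<and> 0 \<le> Lc i"
    and m1: "is_constr_min m (lcsvrg_obj G \<gamma> xk (chi 0)) (lcsvrg_con f gf Lc chi xk) eta y1"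
    and m2: "is_constr_min m (lcsvrg_obj G \<gamma> xk (chi 0)) (lcsvrg_con f gf Lc chi xk) eta y2"
    and fin: "chi 0 y1 < \<infinity>"
  shows "y1 = y2"
proof -
  let ?z = "(1/2) *\<^sub>R y1 + (1/2) *\<^sub>R y2"
  let ?obj = "lcsvrg_obj G \<gamma> xk (chi 0)"
  define q where "q = (\<lambda>y. G \<bullet> y + \<gamma> / 2 * (norm (y - xk))\<^sup>2)"
  have o21: "?obj y2 \<le> ?obj y1" "?obj y1 \<le> ?obj y2" using m1 m2 by (auto simp: is_constr_min_def)
  have fin2: "chi 0 y2 < \<infinity>"
  proof (rule ccontr)
    assume "\<not> ?thesis" then have "chi 0 y2 = \<infinity>" by simp
    then have "?obj y2 = \<infinity>" by (simp add: lcsvrg_obj_def)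
    moreover have "?obj y1 < \<infinity>" using fin by (simp add: lcsvrg_obj_def)
    ultimately show False using o21 by simp
  qed
  define a1 where "a1 = real_of_ereal (chi 0 y1)"
  define a2 where "a2 = real_of_ereal (chi 0 y2)"
  have A1: "chi 0 y1 = ereal a1" using proper_fin[OF c0(2) fin] by (simp add: a1_def)
  have A2: "chi 0 y2 = ereal a2" using proper_fin[OF c0(2) fin2] by (simp add: a2_def)
  have eq: "q y1 + a1 = q y2 + a2"
    using o21 by (simp add: lcsvrg_obj_def A1 A2 q_def)
  have feasz: "\<forall>i\<in>{1..m}. lcsvrg_con f gf Lc chi xk i ?z \<le> ereal (eta i)"
  proof
    fix i assume i: "i \<in> {1..m}"
    have h1: "lcsvrg_con f gf Lc chi xk i y1 \<le> ereal (eta i)" "lcsvrg_con f gf Lc chi xk i y2 \<le> ereal (eta i)"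
      using m1 m2 i unfolding is_constr_min_def by blast+
    have cv: "econvex (chi i)" "proper_fun (chi i)" "0 \<le> Lc i" using ci i by blast+
    show "lcsvrg_con f gf Lc chi xk i ?z \<le> ereal (eta i)"
      by (rule con_mid_feas[OF cv h1])
  qed
  have "?obj y1 \<le> ?obj ?z" using m1 feasz unfolding is_constr_min_def by blast
  moreover have cz: "chi 0 ?z \<le> ereal ((a1 + a2) / 2)"
    using econvex_mid[OF c0 fin fin2] by (simp add: a1_def a2_def)
  moreover have "?obj ?z = ereal (q ?z) + chi 0 ?z" by (simp add: lcsvrg_obj_def q_def)
  moreover have "ereal (q ?z) + chi 0 ?z \<le> ereal (q ?z) + ereal ((a1 + a2) / 2)"
    using cz by (rule add_left_mono)
  ultimately have "?obj y1 \<le> ereal (q ?z + (a1 + a2) / 2)" by simp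
  then have le: "q y1 + a1 \<le> q ?z + (a1 + a2) / 2" by (simp add: lcsvrg_obj_def A1 q_def)
  have lin: "G \<bullet> ?z = (G \<bullet> y1 + G \<bullet> y2) / 2"
    by (simp add: inner_add_right)
  have "q ?z = (q y1 + q y2) / 2 - \<gamma> / 8 * (norm (y1 - y2))\<^sup>2"
    unfolding q_def lin norm_mid_sq by (simp add: algebra_simps add_divide_distrib)
  with le eq have "\<gamma> / 8 * (norm (y1 - y2))\<^sup>2 \<le> 0" unfolding add_divide_distrib by linarith
  with gam have "(norm (y1 - y2))\<^sup>2 \<le> 0"
    by (simp add: mult_le_0_iff)
  then show ?thesis by simp
qed



lemma sum_lam_L_le:
  fixes lam L :: "nat \<Rightarrow> real"
  assumes "\<forall>i\<in>A. 0 \<le> lam i" "\<forall>i\<in>A. 0 \<le> L i" "L2_set lam A \<le> B"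
  shows "(\<Sum>i\<in>A. lam i * L i) \<le> B * L2_set L A"
proof -
  have "(\<Sum>i\<in>A. lam i * L i) = (\<Sum>i\<in>A. \<bar>lam i\<bar> * \<bar>L i\<bar>)"
    using assms by (intro sum.cong) auto
  also have "\<dots> \<le> L2_set lam A * L2_set L A" by (rule L2_set_mult_ineq)
  also have "\<dots> \<le> B * L2_set L A" using assms(3) by (intro mult_right_mono) (auto simp: L2_set_nonneg)
  finally show ?thesis .
qed

lemma sq_sum_le: "((a::real) + b)\<^sup>2 \<le> 2 * a\<^sup>2 + 2 * b\<^sup>2"
proof -
  have "0 \<le> (a - b)\<^sup>2" by simp
  then show ?thesis by (simp add: power2_eq_square algebra_simps)
qed

context
  fixes f :: "nat \<Rightarrow> 'a::real_inner \<Rightarrow> real" and gradf :: "nat \<Rightarrow> 'a \<Rightarrow> 'a"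
    and chi :: "nat \<Rightarrow> 'a \<Rightarrow> ereal" and Lc :: "nat \<Rightarrow> real" and L0 :: real and m :: nat
    and x x' G :: 'a and \<gamma> B :: real and ek eta :: "nat \<Rightarrow> real" and lam :: "nat \<Rightarrow> real"
  assumes c0: "proper_fun (chi 0)"
    and ci: "\<forall>i\<in>{1..m}. proper_fun (chi i) \<and> edom (chi 0) \<subseteq> edom (chi i)"
    and Lpos: "\<forall>i\<in>{1..m}. 0 \<le> Lc i"
    and f_desc: "\<forall>i\<in>{1..m}. \<forall>y z. \<bar>f i y - f i z - gradf i z \<bullet> (y - z)\<bar> \<le> Lc i / 2 * (norm (y - z))\<^sup>2"
    and f0_desc: "\<forall>y z. \<bar>f 0 y - f 0 z - gradf 0 z \<bullet> (y - z)\<bar> \<le> L0 / 2 * (norm (y - z))\<^sup>2"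
    and g0_lip: "\<forall>y z. norm (gradf 0 y - gradf 0 z) \<le> L0 * norm (y - z)"
    and gi_lip: "\<forall>i\<in>{1..m}. \<forall>y z. norm (gradf i y - gradf i z) \<le> Lc i * norm (y - z)"
    and xdom: "x \<in> edom (chi 0)"
    and xfeas: "\<forall>i\<in>{1..m}. f i x + real_of_ereal (chi i x) \<le> ek i"
    and xmin: "is_constr_min m (lcsvrg_obj G \<gamma> x (chi 0)) (lcsvrg_con f gradf Lc chi x) ek x'"
    and kkt: "(\<forall>i\<in>{1..m}. 0 \<le> lam i) \<and>
        0 \<in> lag_set m (comp_subdiff (G + \<gamma> *\<^sub>R (x' - x)) (chi 0) x')
              (\<lambda>i. comp_subdiff (gradf i x + Lc i *\<^sub>R (x' - x)) (chi i) x') lam \<and>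
        (\<forall>i\<in>{1..m}. lam i * (real_of_ereal (lcsvrg_con f gradf Lc chi x i x') - ek i) = 0)"
    and lb: "L2_set lam {1..m} \<le> B"
begin

lemma kkt_obtain:
  obtains s0 s where "s0 \<in> csubdiff (chi 0) x'" "\<forall>i\<in>{1..m}. s i \<in> csubdiff (chi i) x'"
    "(G + \<gamma> *\<^sub>R (x' - x) + s0) + (\<Sum>i\<in>{1..m}. lam i *\<^sub>R (gradf i x + Lc i *\<^sub>R (x' - x) + s i)) = 0"
proof -
  from kkt obtain g0 g where g0: "g0 \<in> comp_subdiff (G + \<gamma> *\<^sub>R (x' - x)) (chi 0) x'"
    and g: "\<forall>i\<in>{1..m}. g i \<in> comp_subdiff (gradf i x + Lc i *\<^sub>R (x' - x)) (chi i) x'"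
    and z: "g0 + (\<Sum>i\<in>{1..m}. lam i *\<^sub>R g i) = 0"
    unfolding lag_set_def by auto
  from g0 obtain s0 where s0: "s0 \<in> csubdiff (chi 0) x'" "g0 = G + \<gamma> *\<^sub>R (x' - x) + s0"
    unfolding comp_subdiff_def by auto
  have "\<forall>i\<in>{1..m}. \<exists>si. si \<in> csubdiff (chi i) x' \<and> g i = gradf i x + Lc i *\<^sub>R (x' - x) + si"
    using g unfolding comp_subdiff_def by auto
  then obtain s where s: "\<forall>i\<in>{1..m}. s i \<in> csubdiff (chi i) x' \<and> g i = gradf i x + Lc i *\<^sub>R (x' - x) + s i"
    by metis
  have "(\<Sum>i\<in>{1..m}. lam i *\<^sub>R g i) = (\<Sum>i\<in>{1..m}. lam i *\<^sub>R (gradf i x + Lc i *\<^sub>R (x' - x) + s i))"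
    using s by (intro sum.cong) auto
  with z s0 s show ?thesis using that by auto
qed

lemma xp_dom: "x' \<in> edom (chi 0)"
proof -
  obtain s0 s where "s0 \<in> csubdiff (chi 0) x'" by (rule kkt_obtain)
  then show ?thesis by (auto simp: csubdiff_def edom_def)
qed

lemma chi_fin: "i \<in> {1..m} \<Longrightarrow> y \<in> edom (chi 0) \<Longrightarrow> chi i y = ereal (real_of_ereal (chi i y))"
  using ci by (intro proper_fin) (auto simp: edom_def)

lemma chi0_fin: "y \<in> edom (chi 0) \<Longrightarrow> chi 0 y = ereal (real_of_ereal (chi 0 y))"
  using c0 by (intro proper_fin) (auto simp: edom_def)

lemma con_real: "i \<in> {1..m} \<Longrightarrow> lcsvrg_con f gradf Lc chi x i x'
   = ereal (f i x + gradf i x \<bullet> (x' - x) + Lc i / 2 * (norm (x' - x))\<^sup>2 + real_of_ereal (chi i x'))"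
  unfolding lcsvrg_con_def by (subst chi_fin[OF _ xp_dom]) auto

lemma xp_feas: "\<forall>i\<in>{1..m}. f i x' + real_of_ereal (chi i x') \<le> ek i"
proof
  fix i assume i: "i \<in> {1..m}"
  have "lcsvrg_con f gradf Lc chi x i x' \<le> ereal (ek i)" using xmin i by (auto simp: is_constr_min_def)
  then have a: "f i x + gradf i x \<bullet> (x' - x) + Lc i / 2 * (norm (x' - x))\<^sup>2 + real_of_ereal (chi i x') \<le> ek i"
    by (simp add: con_real[OF i])
  have "f i x' - f i x - gradf i x \<bullet> (x' - x) \<le> Lc i / 2 * (norm (x' - x))\<^sup>2"
    using f_desc i by (meson abs_le_D1)
  with a show "f i x' + real_of_ereal (chi i x') \<le> ek i" by linarith
qed

lemma lam_inner_nonneg: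
  assumes i: "i \<in> {1..m}" and si: "si \<in> csubdiff (chi i) x'"
  shows "0 \<le> lam i * ((gradf i x + Lc i *\<^sub>R (x' - x) + si) \<bullet> (x' - x))"
proof -
  have l: "0 \<le> lam i" using kkt i by auto
  have sub: "real_of_ereal (chi i x') + si \<bullet> (x - x') \<le> real_of_ereal (chi i x)"
    using ci i xdom by (intro csubdiff_ineq[OF si]) (auto simp: edom_def)
  have sl: "lam i * (real_of_ereal (lcsvrg_con f gradf Lc chi x i x') - ek i) = 0" using kkt i by auto
  have cr: "real_of_ereal (lcsvrg_con f gradf Lc chi x i x')
      = f i x + gradf i x \<bullet> (x' - x) + Lc i / 2 * (norm (x' - x))\<^sup>2 + real_of_ereal (chi i x')"
    by (simp add: con_real[OF i])
  have Li: "0 \<le> Lc i" using Lpos i by auto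
  have ii: "(gradf i x + Lc i *\<^sub>R (x' - x) + si) \<bullet> (x' - x)
       = gradf i x \<bullet> (x' - x) + Lc i * (norm (x' - x))\<^sup>2 + si \<bullet> (x' - x)"
    by (simp add: inner_add_left power2_norm_eq_inner)
  have si2: "si \<bullet> (x' - x) = - (si \<bullet> (x - x'))" by (simp add: inner_diff_right)
  have "real_of_ereal (lcsvrg_con f gradf Lc chi x i x') - ek i \<le> (gradf i x + Lc i *\<^sub>R (x' - x) + si) \<bullet> (x' - x)"
  proof -
    have xf: "f i x + real_of_ereal (chi i x) \<le> ek i" using xfeas i by auto
    have "Lc i / 2 * (norm (x' - x))\<^sup>2 \<le> Lc i * (norm (x' - x))\<^sup>2"
      using Li by (intro mult_right_mono) auto
    then show ?thesis using xf sub unfolding cr ii si2 by linarith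
  qed
  then have "lam i * (real_of_ereal (lcsvrg_con f gradf Lc chi x i x') - ek i) \<le> lam i * ((gradf i x + Lc i *\<^sub>R (x' - x) + si) \<bullet> (x' - x))"
    using l by (rule mult_left_mono)
  with sl show ?thesis by linarith
qed

lemma descent_G:
  "f 0 x' + real_of_ereal (chi 0 x') \<le> f 0 x + real_of_ereal (chi 0 x) - \<gamma> * (norm (x' - x))\<^sup>2
     + L0 / 2 * (norm (x' - x))\<^sup>2 + (gradf 0 x - G) \<bullet> (x' - x)"
proof -
  obtain s0 s where s0: "s0 \<in> csubdiff (chi 0) x'" and s: "\<forall>i\<in>{1..m}. s i \<in> csubdiff (chi i) x'"
    and z: "(G + \<gamma> *\<^sub>R (x' - x) + s0) + (\<Sum>i\<in>{1..m}. lam i *\<^sub>R (gradf i x + Lc i *\<^sub>R (x' - x) + s i)) = 0"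
    by (rule kkt_obtain)
  let ?D = "x' - x"
  have "0 = ((G + \<gamma> *\<^sub>R ?D + s0) + (\<Sum>i\<in>{1..m}. lam i *\<^sub>R (gradf i x + Lc i *\<^sub>R ?D + s i))) \<bullet> ?D"
    using z by simp
  also have "\<dots> = (G + \<gamma> *\<^sub>R ?D + s0) \<bullet> ?D + (\<Sum>i\<in>{1..m}. lam i * ((gradf i x + Lc i *\<^sub>R ?D + s i) \<bullet> ?D))"
    by (simp add: inner_add_left inner_sum_left)
  finally have e: "(G + \<gamma> *\<^sub>R ?D + s0) \<bullet> ?D = - (\<Sum>i\<in>{1..m}. lam i * ((gradf i x + Lc i *\<^sub>R ?D + s i) \<bullet> ?D))"
    by linarith
  have "0 \<le> (\<Sum>i\<in>{1..m}. lam i * ((gradf i x + Lc i *\<^sub>R ?D + s i) \<bullet> ?D))"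
    using s by (intro sum_nonneg lam_inner_nonneg) auto
  with e have a: "G \<bullet> ?D + \<gamma> * (norm ?D)\<^sup>2 + s0 \<bullet> ?D \<le> 0"
    by (simp add: inner_add_left power2_norm_eq_inner)
  have sub: "real_of_ereal (chi 0 x') + s0 \<bullet> (x - x') \<le> real_of_ereal (chi 0 x)"
    using c0 xdom by (intro csubdiff_ineq[OF s0]) (auto simp: edom_def)
  have si2: "s0 \<bullet> (x - x') = - (s0 \<bullet> ?D)" by (simp add: inner_diff_right)
  have fd: "f 0 x' - f 0 x - gradf 0 x \<bullet> ?D \<le> L0 / 2 * (norm ?D)\<^sup>2"
    using f0_desc by (meson abs_le_D1)
  have gg: "(gradf 0 x - G) \<bullet> ?D = gradf 0 x \<bullet> ?D - G \<bullet> ?D" by (simp add: inner_diff_left)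
  show ?thesis using a sub fd unfolding si2 gg by linarith
qed

lemma grp_aux: "(a + s + p) - ((g + d + s) + q) = (a - g - d) + (p - (q::'b::ab_group_add))"
  by (simp add: algebra_simps)

lemma scaleR_aux: "c *\<^sub>R (p + s) - c *\<^sub>R (q + r + s) = c *\<^sub>R (p - q - (r::'b::real_vector))"
  by (simp add: algebra_simps)

lemma norm_minus_le:
  assumes "w \<in> S"
  shows "norm_minus S \<le> norm w" "0 \<le> norm_minus S"
proof -
  have bb: "bdd_below (norm ` S)" by (rule bdd_belowI[of _ 0]) auto
  show "norm_minus S \<le> norm w" unfolding norm_minus_def using assms bb by (intro cInf_lower) auto
  show "0 \<le> norm_minus S" unfolding norm_minus_def using assms by (intro cInf_greatest) auto
qed

lemma nm_bound:
  assumes gam: "0 \<le> \<gamma>" and L0: "0 \<le> L0"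
  shows "(norm_minus (lag_set m (comp_subdiff (gradf 0 x') (chi 0) x')
             (\<lambda>i. comp_subdiff (gradf i x') (chi i) x') lam))\<^sup>2
    \<le> 2 * (\<gamma> + L0 + 2 * B * L2_set Lc {1..m})\<^sup>2 * (norm (x' - x))\<^sup>2 + 2 * (norm (G - gradf 0 x))\<^sup>2"
proof -
  obtain s0 s where s0: "s0 \<in> csubdiff (chi 0) x'" and s: "\<forall>i\<in>{1..m}. s i \<in> csubdiff (chi i) x'"
    and z: "(G + \<gamma> *\<^sub>R (x' - x) + s0) + (\<Sum>i\<in>{1..m}. lam i *\<^sub>R (gradf i x + Lc i *\<^sub>R (x' - x) + s i)) = 0"
    by (rule kkt_obtain)
  let ?D = "x' - x"
  define w where "w = (gradf 0 x' + s0) + (\<Sum>i\<in>{1..m}. lam i *\<^sub>R (gradf i x' + s i))"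
  have wS: "w \<in> lag_set m (comp_subdiff (gradf 0 x') (chi 0) x') (\<lambda>i. comp_subdiff (gradf i x') (chi i) x') lam"
  proof -
    have "gradf 0 x' + s0 \<in> (+) (gradf 0 x') ` csubdiff (chi 0) x'" using s0 by blast
    moreover have "\<forall>i\<in>{1..m}. (\<lambda>i. gradf i x' + s i) i \<in> (+) (gradf i x') ` csubdiff (chi i) x'" using s by blast
    ultimately show ?thesis unfolding lag_set_def w_def comp_subdiff_def
      apply (intro CollectI)
      apply (rule exI[where x="gradf 0 x' + s0"])
      apply (rule exI[where x="\<lambda>i. gradf i x' + s i"])
      by auto
  qed
  have "w = w - ((G + \<gamma> *\<^sub>R ?D + s0) + (\<Sum>i\<in>{1..m}. lam i *\<^sub>R (gradf i x + Lc i *\<^sub>R ?D + s i)))"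
    using z by simp
  also have "\<dots> = (gradf 0 x' - G - \<gamma> *\<^sub>R ?D) + (\<Sum>i\<in>{1..m}. lam i *\<^sub>R (gradf i x' - gradf i x - Lc i *\<^sub>R ?D))"
  proof -
    have "(\<Sum>i\<in>{1..m}. lam i *\<^sub>R (gradf i x' + s i)) - (\<Sum>i\<in>{1..m}. lam i *\<^sub>R (gradf i x + Lc i *\<^sub>R ?D + s i))
        = (\<Sum>i\<in>{1..m}. lam i *\<^sub>R (gradf i x' - gradf i x - Lc i *\<^sub>R ?D))"
      by (subst sum_subtractf[symmetric]) (rule sum.cong, simp, rule scaleR_aux)
    then show ?thesis unfolding w_def grp_aux by simp
  qed
  finally have we: "w = \<dots>" .
  have lam0: "\<forall>i\<in>{1..m}. 0 \<le> lam i" using kkt by auto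
  have n1: "norm (gradf 0 x' - G - \<gamma> *\<^sub>R ?D) \<le> (\<gamma> + L0) * norm ?D + norm (G - gradf 0 x)"
  proof -
    have e: "gradf 0 x' - G - \<gamma> *\<^sub>R ?D = (gradf 0 x' - gradf 0 x) + (gradf 0 x - G) - \<gamma> *\<^sub>R ?D" by simp
    have "norm (gradf 0 x' - G - \<gamma> *\<^sub>R ?D) \<le> norm (gradf 0 x' - gradf 0 x) + norm (gradf 0 x - G) + norm (\<gamma> *\<^sub>R ?D)"
      using norm_triangle_ineq4[of "(gradf 0 x' - gradf 0 x) + (gradf 0 x - G)" "\<gamma> *\<^sub>R ?D"]
        norm_triangle_ineq[of "gradf 0 x' - gradf 0 x" "gradf 0 x - G"] unfolding e by linarith
    moreover have "norm (gradf 0 x' - gradf 0 x) \<le> L0 * norm ?D" using g0_lip by auto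
    moreover have "norm (gradf 0 x - G) = norm (G - gradf 0 x)" by (rule norm_minus_commute)
    moreover have "norm (\<gamma> *\<^sub>R ?D) = \<gamma> * norm ?D" using gam by simp
    ultimately show ?thesis by (simp add: algebra_simps)
  qed
  have n2: "norm (\<Sum>i\<in>{1..m}. lam i *\<^sub>R (gradf i x' - gradf i x - Lc i *\<^sub>R ?D)) \<le> 2 * B * L2_set Lc {1..m} * norm ?D"
  proof -
    have "norm (\<Sum>i\<in>{1..m}. lam i *\<^sub>R (gradf i x' - gradf i x - Lc i *\<^sub>R ?D))
        \<le> (\<Sum>i\<in>{1..m}. norm (lam i *\<^sub>R (gradf i x' - gradf i x - Lc i *\<^sub>R ?D)))"
      by (rule norm_sum)
    also have "\<dots> \<le> (\<Sum>i\<in>{1..m}. lam i * (2 * Lc i * norm ?D))"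
    proof (rule sum_mono)
      fix i assume i: "i \<in> {1..m}"
      have "norm (gradf i x' - gradf i x - Lc i *\<^sub>R ?D) \<le> norm (gradf i x' - gradf i x) + norm (Lc i *\<^sub>R ?D)"
        by (rule norm_triangle_ineq4)
      also have "\<dots> \<le> 2 * Lc i * norm ?D" using gi_lip i Lpos by auto
      finally show "norm (lam i *\<^sub>R (gradf i x' - gradf i x - Lc i *\<^sub>R ?D)) \<le> lam i * (2 * Lc i * norm ?D)"
        using lam0 i by (auto intro: mult_left_mono)
    qed
    also have "\<dots> = 2 * norm ?D * (\<Sum>i\<in>{1..m}. lam i * Lc i)"
      by (simp add: sum_distrib_left algebra_simps)
    also have "\<dots> \<le> 2 * norm ?D * (B * L2_set Lc {1..m})"
      using sum_lam_L_le[OF lam0 Lpos lb] by (intro mult_left_mono) auto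
    finally show ?thesis by (simp add: algebra_simps)
  qed
  have "norm w \<le> norm (gradf 0 x' - G - \<gamma> *\<^sub>R ?D) + norm (\<Sum>i\<in>{1..m}. lam i *\<^sub>R (gradf i x' - gradf i x - Lc i *\<^sub>R ?D))"
    by (subst we, rule norm_triangle_ineq)
  then have "norm w \<le> (\<gamma> + L0) * norm ?D + norm (G - gradf 0 x) + 2 * B * L2_set Lc {1..m} * norm ?D"
    using n1 n2 by linarith
  then have "norm w \<le> (\<gamma> + L0 + 2 * B * L2_set Lc {1..m}) * norm ?D + norm (G - gradf 0 x)"
    by (simp add: algebra_simps)
  moreover have "0 \<le> norm_minus (lag_set m (comp_subdiff (gradf 0 x') (chi 0) x') (\<lambda>i. comp_subdiff (gradf i x') (chi i) x') lam)"
    using norm_minus_le[OF wS] by simp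
  ultimately have "(norm_minus (lag_set m (comp_subdiff (gradf 0 x') (chi 0) x') (\<lambda>i. comp_subdiff (gradf i x') (chi i) x') lam))\<^sup>2
      \<le> ((\<gamma> + L0 + 2 * B * L2_set Lc {1..m}) * norm ?D + norm (G - gradf 0 x))\<^sup>2"
    using norm_minus_le(1)[OF wS] by (intro power_mono) auto
  also have "\<dots> \<le> 2 * ((\<gamma> + L0 + 2 * B * L2_set Lc {1..m}) * norm ?D)\<^sup>2 + 2 * (norm (G - gradf 0 x))\<^sup>2"
    by (rule sq_sum_le)
  finally show ?thesis by (simp add: power_mult_distrib)
qed

lemma lam_term_bound:
  assumes ek_lt: "\<forall>i\<in>{1..m}. ek i < eta i"
  shows "(\<Sum>i\<in>{1..m}. lam i * \<bar>real_of_ereal (ereal (f i x') + chi i x') - eta i\<bar>)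
     \<le> B * L2_set (\<lambda>i. eta i - ek i) {1..m} + B * L2_set Lc {1..m} * (norm (x' - x))\<^sup>2"
proof -
  have lam0: "\<forall>i\<in>{1..m}. 0 \<le> lam i" using kkt by auto
  have "(\<Sum>i\<in>{1..m}. lam i * \<bar>real_of_ereal (ereal (f i x') + chi i x') - eta i\<bar>)
      \<le> (\<Sum>i\<in>{1..m}. lam i * (eta i - ek i) + lam i * Lc i * (norm (x' - x))\<^sup>2)"
  proof (rule sum_mono)
    fix i assume i: "i \<in> {1..m}"
    have r: "real_of_ereal (ereal (f i x') + chi i x') = f i x' + real_of_ereal (chi i x')"
      by (subst chi_fin[OF i xp_dom]) simp
    have fe: "f i x' + real_of_ereal (chi i x') \<le> ek i" using xp_feas i by auto
    have ab: "\<bar>f i x' + real_of_ereal (chi i x') - eta i\<bar> = eta i - (f i x' + real_of_ereal (chi i x'))"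
    proof -
      have "ek i < eta i" using ek_lt i by blast
      then show ?thesis using fe by linarith
    qed
    have sl: "lam i * (real_of_ereal (lcsvrg_con f gradf Lc chi x i x') - ek i) = 0" using kkt i by auto
    have cr: "real_of_ereal (lcsvrg_con f gradf Lc chi x i x')
      = f i x + gradf i x \<bullet> (x' - x) + Lc i / 2 * (norm (x' - x))\<^sup>2 + real_of_ereal (chi i x')"
      by (simp add: con_real[OF i])
    have fd: "- (f i x' - f i x - gradf i x \<bullet> (x' - x)) \<le> Lc i / 2 * (norm (x' - x))\<^sup>2"
      using f_desc i by (meson abs_le_D2)
    have "lam i * (eta i - (f i x' + real_of_ereal (chi i x')))
        = lam i * (eta i - ek i) + lam i * (real_of_ereal (lcsvrg_con f gradf Lc chi x i x') - (f i x' + real_of_ereal (chi i x')))"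
    proof -
      have "lam i * real_of_ereal (lcsvrg_con f gradf Lc chi x i x') = lam i * ek i"
      proof -
        have "lam i * real_of_ereal (lcsvrg_con f gradf Lc chi x i x') - lam i * ek i = 0"
          using sl by (simp only: right_diff_distrib)
        then show ?thesis by linarith
      qed
      then show ?thesis by (simp only: right_diff_distrib distrib_left)
    qed
    also have "\<dots> \<le> lam i * (eta i - ek i) + lam i * (Lc i * (norm (x' - x))\<^sup>2)"
    proof -
      have "real_of_ereal (lcsvrg_con f gradf Lc chi x i x') - (f i x' + real_of_ereal (chi i x')) \<le> Lc i * (norm (x' - x))\<^sup>2"
        unfolding cr using fd by (simp add: algebra_simps)
      then show ?thesis using lam0 i by (intro add_left_mono mult_left_mono) auto
    qed
    finally show "lam i * \<bar>real_of_ereal (ereal (f i x') + chi i x') - eta i\<bar>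
        \<le> lam i * (eta i - ek i) + lam i * Lc i * (norm (x' - x))\<^sup>2"
      unfolding r ab by (simp add: algebra_simps)
  qed
  also have "\<dots> = (\<Sum>i\<in>{1..m}. lam i * (eta i - ek i)) + (\<Sum>i\<in>{1..m}. lam i * Lc i) * (norm (x' - x))\<^sup>2"
    by (simp add: sum.distrib sum_distrib_right)
  also have "\<dots> \<le> B * L2_set (\<lambda>i. eta i - ek i) {1..m} + B * L2_set Lc {1..m} * (norm (x' - x))\<^sup>2"
  proof (rule add_mono)
    show "(\<Sum>i\<in>{1..m}. lam i * (eta i - ek i)) \<le> B * L2_set (\<lambda>i. eta i - ek i) {1..m}"
      using ek_lt by (intro sum_lam_L_le[OF lam0 _ lb]) auto
    show "(\<Sum>i\<in>{1..m}. lam i * Lc i) * (norm (x' - x))\<^sup>2 \<le> B * L2_set Lc {1..m} * (norm (x' - x))\<^sup>2"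
      using sum_lam_L_le[OF lam0 Lpos lb] by (intro mult_right_mono) auto
  qed
  finally show ?thesis .
qed

end


lemma sum_list_map_add_const:
  fixes v :: "nat \<Rightarrow> 'a::real_vector"
  shows "sum_list (map (\<lambda>j. v j + c) s) = sum_list (map v s) + real (length s) *\<^sub>R c"
  by (induction s) (auto simp: algebra_simps)

lemma var_step:
  fixes u :: "nat \<Rightarrow> 'a::real_inner" and a :: 'a
  assumes n: "0 < n" and b: "0 < b" and uc: "\<forall>j<n. norm (u j) \<le> c"
  shows "(\<Sum>s\<in>batches n b. (norm (a + (1 / real b) *\<^sub>R (\<Sum>j\<leftarrow>s. u j) - (1 / real n) *\<^sub>R (\<Sum>j<n. u j)))\<^sup>2)
            / real (card (batches n b)) \<le> (norm a)\<^sup>2 + c\<^sup>2 / real b"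
proof -
  define ub where "ub = (1 / real n) *\<^sub>R (\<Sum>j<n. u j)"
  define v where "v = (\<lambda>j. u j - ub)"
  have sumu: "(\<Sum>j<n. u j) = real n *\<^sub>R ub" using n by (simp add: ub_def)
  have sv: "(\<Sum>j<n. v j) = 0" by (simp add: v_def sum_subtractf sumu sum_constant_scaleR)
  let ?W = "\<lambda>s. sum_list (map v s)"
  have inner_eq: "a + (1 / real b) *\<^sub>R (\<Sum>j\<leftarrow>s. u j) - ub = a + (1 / real b) *\<^sub>R ?W s"
    if s: "s \<in> batches n b" for s
  proof -
    have "(\<Sum>j\<leftarrow>s. u j) = sum_list (map (\<lambda>j. v j + ub) s)" by (simp add: v_def)
    also have "\<dots> = ?W s + real b *\<^sub>R ub" using s by (simp add: sum_list_map_add_const batches_def)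
    finally show ?thesis using b by (simp add: algebra_simps)
  qed
  have sq: "(norm (a + (1 / real b) *\<^sub>R ?W s))\<^sup>2 = (norm a)\<^sup>2 + 2 / real b * (a \<bullet> ?W s) + (norm (?W s))\<^sup>2 / (real b)\<^sup>2" for s
    unfolding power2_norm_eq_inner by (simp add: inner_add_left inner_add_right inner_commute field_simps power2_eq_square)
  have card: "real (card (batches n b)) = real n ^ b" by (simp add: card_batches)
  have cpos: "0 < real n ^ b" using n by simp
  have "(\<Sum>s\<in>batches n b. (norm (a + (1 / real b) *\<^sub>R (\<Sum>j\<leftarrow>s. u j) - (1 / real n) *\<^sub>R (\<Sum>j<n. u j)))\<^sup>2)
     = (\<Sum>s\<in>batches n b. (norm a)\<^sup>2 + 2 / real b * (a \<bullet> ?W s) + (norm (?W s))\<^sup>2 / (real b)\<^sup>2)"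
    unfolding ub_def[symmetric] by (intro sum.cong) (simp_all add: inner_eq sq)
  also have "\<dots> = real n ^ b * (norm a)\<^sup>2 + 2 / real b * (a \<bullet> (\<Sum>s\<in>batches n b. ?W s))
        + (\<Sum>s\<in>batches n b. (norm (?W s))\<^sup>2) / (real b)\<^sup>2"
    by (simp add: sum.distrib card sum_distrib_left inner_sum_right sum_divide_distrib)
  also have "(\<Sum>s\<in>batches n b. ?W s) = 0" by (rule batch_sum_zero[OF sv])
  also have "(\<Sum>s\<in>batches n b. (norm (?W s))\<^sup>2) = real b * real n ^ b * (\<Sum>j<n. (norm (v j))\<^sup>2) / real n"
    using batch_sum_sq[OF sv, of b] n by (simp add: field_simps)
  finally have e1: "(\<Sum>s\<in>batches n b. (norm (a + (1 / real b) *\<^sub>R (\<Sum>j\<leftarrow>s. u j) - (1 / real n) *\<^sub>R (\<Sum>j<n. u j)))\<^sup>2)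
      / real (card (batches n b)) = (norm a)\<^sup>2 + (\<Sum>j<n. (norm (v j))\<^sup>2) / (real b * real n)"
    using cpos b n unfolding card by (simp add: field_simps power2_eq_square)
  have "(\<Sum>j<n. (norm (v j))\<^sup>2) = (\<Sum>j<n. (norm (u j))\<^sup>2) - real n * (norm ub)\<^sup>2"
  proof -
    have "(\<Sum>j<n. (norm (v j))\<^sup>2) = (\<Sum>j<n. (norm (u j))\<^sup>2 - 2 * (u j \<bullet> ub) + (norm ub)\<^sup>2)"
      by (intro sum.cong) (simp_all add: v_def power2_norm_eq_inner inner_diff_left inner_diff_right inner_commute)
    also have "\<dots> = (\<Sum>j<n. (norm (u j))\<^sup>2) - 2 * ((\<Sum>j<n. u j) \<bullet> ub) + real n * (norm ub)\<^sup>2"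
      by (simp add: sum.distrib sum_subtractf sum_distrib_left inner_sum_left)
    also have "\<dots> = (\<Sum>j<n. (norm (u j))\<^sup>2) - real n * (norm ub)\<^sup>2"
      unfolding sumu by (simp add: power2_norm_eq_inner)
    finally show ?thesis .
  qed
  also have "\<dots> \<le> (\<Sum>j<n. (norm (u j))\<^sup>2)" by simp
  also have "\<dots> \<le> (\<Sum>j<n. c\<^sup>2)"
    using uc by (intro sum_mono power_mono) auto
  also have "\<dots> = real n * c\<^sup>2" by simp
  finally have "(\<Sum>j<n. (norm (v j))\<^sup>2) / (real b * real n) \<le> real n * c\<^sup>2 / (real b * real n)"
    using b n by (intro divide_right_mono) auto
  also have "\<dots> = c\<^sup>2 / real b" using n by simp
  finally show ?thesis unfolding e1 by simp
qed



lemma epoch_card: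
  assumes T: "0 < T"
  shows "card {k\<in>{..K}. j \<in> {T * (k div T)..<k}} \<le> T - 1"
proof -
  have sub: "{k\<in>{..K}. j \<in> {T * (k div T)..<k}} \<subseteq> {Suc j..<T * (j div T) + T}"
  proof
    fix k assume "k \<in> {k\<in>{..K}. j \<in> {T * (k div T)..<k}}"
    then have a: "T * (k div T) \<le> j" "j < k" by auto
    have "k div T \<le> j div T"
    proof -
      have "(T * (k div T)) div T \<le> j div T" using a(1) by (rule div_le_mono)
      then show ?thesis using T by simp
    qed
    then have "T * (k div T) \<le> T * (j div T)" by simp
    moreover have "k < T * (k div T) + T"
      using T by (metis add.commute div_mult_mod_eq mod_less_divisor nat_add_left_cancel_less mult.commute)
    ultimately have "k < T * (j div T) + T" by linarith
    with a show "k \<in> {Suc j..<T * (j div T) + T}" by auto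
  qed
  have "card {k\<in>{..K}. j \<in> {T * (k div T)..<k}} \<le> card {Suc j..<T * (j div T) + T}"
    by (rule card_mono[OF _ sub]) simp
  also have "\<dots> = T * (j div T) + T - Suc j" by simp
  also have "\<dots> \<le> T - 1"
  proof -
    have "T * (j div T) \<le> j" by (metis div_times_less_eq_dividend mult.commute)
    then show ?thesis by linarith
  qed
  finally show ?thesis .
qed

lemma epoch_count:
  fixes w :: "nat \<Rightarrow> real"
  assumes w: "\<forall>j. 0 \<le> w j" and T: "0 < T"
  shows "(\<Sum>k\<le>K. \<Sum>j\<in>{T * (k div T)..<k}. w j) \<le> real (T - 1) * (\<Sum>j\<le>K. w j)"
proof -
  have "(\<Sum>k\<le>K. \<Sum>j\<in>{T * (k div T)..<k}. w j) = (\<Sum>k\<le>K. \<Sum>j\<le>K. if j \<in> {T * (k div T)..<k} then w j else 0)"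
  proof (rule sum.cong[OF refl])
    fix k assume k: "k \<in> {..K}"
    have "{T * (k div T)..<k} = {..K} \<inter> {T * (k div T)..<k}" using k by auto
    then show "(\<Sum>j\<in>{T * (k div T)..<k}. w j) = (\<Sum>j\<le>K. if j \<in> {T * (k div T)..<k} then w j else 0)"
      by (metis (no_types) finite_atMost sum.inter_restrict)
  qed
  also have "\<dots> = (\<Sum>j\<le>K. \<Sum>k\<le>K. if j \<in> {T * (k div T)..<k} then w j else 0)"
    by (rule sum.swap)
  also have "\<dots> = (\<Sum>j\<le>K. real (card {k\<in>{..K}. j \<in> {T * (k div T)..<k}}) * w j)"
  proof (rule sum.cong[OF refl])
    fix j
    have "(\<Sum>k\<le>K. if j \<in> {T * (k div T)..<k} then w j else 0) = (\<Sum>k\<in>{k\<in>{..K}. j \<in> {T * (k div T)..<k}}. w j)"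
      by (rule sum.inter_filter[symmetric]) simp
    then show "(\<Sum>k\<le>K. if j \<in> {T * (k div T)..<k} then w j else 0) = real (card {k\<in>{..K}. j \<in> {T * (k div T)..<k}}) * w j"
      by simp
  qed
  also have "\<dots> \<le> (\<Sum>j\<le>K. real (T - 1) * w j)"
    using epoch_card[OF T] w by (intro sum_mono mult_right_mono) auto
  also have "\<dots> = real (T - 1) * (\<Sum>j\<le>K. w j)" by (simp add: sum_distrib_left)
  finally show ?thesis .
qed

lemma E_mono:
  fixes f g :: "'a \<Rightarrow> real"
  assumes "finite (set_pmf p)" "\<And>x. x \<in> set_pmf p \<Longrightarrow> f x \<le> g x"
  shows "measure_pmf.expectation p f \<le> measure_pmf.expectation p g"
  using assms by (intro integral_mono_AE) (auto simp: AE_measure_pmf_iff integrable_measure_pmf_finite)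

lemma E_add:
  fixes f g :: "'a \<Rightarrow> real"
  assumes "finite (set_pmf p)"
  shows "measure_pmf.expectation p (\<lambda>x. f x + g x) = measure_pmf.expectation p f + measure_pmf.expectation p g"
  using assms by (intro Bochner_Integration.integral_add) (auto simp: integrable_measure_pmf_finite)

lemma E_cmult:
  fixes f :: "'a \<Rightarrow> real"
  shows "measure_pmf.expectation p (\<lambda>x. c * f x) = c * measure_pmf.expectation p f"
  by simp

lemma E_const:
  shows "measure_pmf.expectation p (\<lambda>x. c) = (c::real)"
  by (simp add: measure_pmf.prob_space)

lemma E_sum:
  fixes f :: "nat \<Rightarrow> 'a \<Rightarrow> real"
  assumes "finite (set_pmf p)"
  shows "measure_pmf.expectation p (\<lambda>x. \<Sum>k\<in>A. f k x) = (\<Sum>k\<in>A. measure_pmf.expectation p (f k))"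
  using assms by (intro Bochner_Integration.integral_sum) (auto simp: integrable_measure_pmf_finite)

lemma E_nonneg:
  fixes f :: "'a \<Rightarrow> real"
  assumes "finite (set_pmf p)" "\<And>x. x \<in> set_pmf p \<Longrightarrow> 0 \<le> f x"
  shows "0 \<le> measure_pmf.expectation p f"
  using E_mono[OF assms(1), of "\<lambda>_. 0" f] assms(2) by (simp add: E_const)



lemma amgm_beta:
  fixes p q \<beta> :: real
  assumes "0 < \<beta>"
  shows "p * q \<le> p\<^sup>2 / (2 * \<beta>) + \<beta> / 2 * q\<^sup>2"
proof -
  have "0 \<le> (p - \<beta> * q)\<^sup>2" by simp
  then have "2 * \<beta> * (p * q) \<le> p\<^sup>2 + \<beta>\<^sup>2 * q\<^sup>2" by (simp add: power2_eq_square algebra_simps)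
  then show ?thesis using assms by (simp add: field_simps power2_eq_square)
qed

lemma cst_aux:
  fixes x y :: real
  assumes "0 \<le> x" "0 \<le> y"
  shows "2 * (x + 2 * y)\<^sup>2 + x\<^sup>2 \<le> 8 * (x + y)\<^sup>2"
proof -
  have e: "8 * (x + y)\<^sup>2 - (2 * (x + 2 * y)\<^sup>2 + x\<^sup>2) = 5 * x\<^sup>2 + 8 * (x * y)"
    by (simp add: power2_eq_square algebra_simps)
  have "0 \<le> 5 * x\<^sup>2 + 8 * (x * y)" using assms by simp
  with e show ?thesis by linarith
qed

theorem mainTheorem15:
  fixes f :: "nat \<Rightarrow> 'a::euclidean_space \<Rightarrow> real"
    and gradf :: "nat \<Rightarrow> 'a \<Rightarrow> 'a"
    and chi :: "nat \<Rightarrow> 'a \<Rightarrow> ereal"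
    and Lc :: "nat \<Rightarrow> real" and L0 :: real and m :: nat
    and eta :: "nat \<Rightarrow> real"
    and F :: "'a \<Rightarrow> 'b \<Rightarrow> real" and gradF :: "'a \<Rightarrow> 'b \<Rightarrow> 'a"
    and xi :: "nat \<Rightarrow> 'b" and n :: nat
    and T b :: nat and \<gamma> \<beta> B :: real
    and x :: "nat \<Rightarrow> (nat \<Rightarrow> nat list) \<Rightarrow> 'a" and x0 :: 'a
    and G :: "nat \<Rightarrow> (nat \<Rightarrow> nat list) \<Rightarrow> 'a"
    and lam :: "nat \<Rightarrow> (nat \<Rightarrow> nat list) \<Rightarrow> nat \<Rightarrow> real"
    and etak :: "nat \<Rightarrow> nat \<Rightarrow> real"
    and \<alpha> :: "nat \<Rightarrow> real"
    and K r0 j0 :: nat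
  defines "Feas \<equiv> {y \<in> edom (chi 0). \<forall>i\<in>{1..m}. ereal (f i y) + chi i y \<le> ereal (eta i)}"
  defines "psi0star \<equiv> Inf ((\<lambda>y. ereal (f 0 y) + chi 0 y) ` Feas)"
  defines "Lt \<equiv> (2 * \<gamma> - \<beta> - L0) / 2 - L0\<^sup>2 * (real T - 1) / (2 * \<beta> * real b)"
  defines "D \<equiv> sqrt ((real_of_ereal (ereal (f 0 x0) + chi 0 x0) - real_of_ereal psi0star) / L0)"
  defines "normL \<equiv> L2_set Lc {1..m}"
  (* problem data *)
  assumes n_pos: "0 < n"
    and F_deriv: "\<forall>j<n. \<forall>y. ((\<lambda>z. F z (xi j)) has_derivative (\<lambda>h. gradF y (xi j) \<bullet> h)) (at y)"
    and F_lip: "\<forall>j<n. \<forall>y z. norm (gradF y (xi j) - gradF z (xi j)) \<le> L0 * norm (y - z)"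
    and f0_def: "f 0 = (\<lambda>y. (\<Sum>j<n. F y (xi j)) / real n)"
    and gradf0_def: "gradf 0 = (\<lambda>y. (1 / real n) *\<^sub>R (\<Sum>j<n. gradF y (xi j)))"
    and f_deriv: "\<forall>i\<in>{1..m}. \<forall>y. (f i has_derivative (\<lambda>h. gradf i y \<bullet> h)) (at y)"
    and f_lip: "\<forall>i\<in>{1..m}. \<forall>y z. norm (gradf i y - gradf i z) \<le> Lc i * norm (y - z)"
    and chi0: "proper_fun (chi 0)" "econvex (chi 0)" "elsc (chi 0)"
    and chii: "\<forall>i\<in>{1..m}. proper_fun (chi i) \<and> econvex (chi i) \<and>
                 edom (chi 0) \<subseteq> edom (chi i) \<and> continuous_on (edom (chi 0)) (chi i)"
    and feas: "Feas \<noteq> {}" "compact Feas"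
    and opt_finite: "\<bar>psi0star\<bar> \<noteq> \<infinity>"
  (* parameters *)
    and L0_pos: "0 < L0" and T_pos: "0 < T" and b_ge: "real b \<ge> 2 * real T"
    and gamma_pos: "0 < \<gamma>"
    and beta: "0 < \<beta>" "\<beta> < 2 * \<gamma> - L0"
    and Lt_pos: "0 < Lt"
    and B_pos: "0 < B"
  (* initialization and level sequence *)
    and x0_dom: "x0 \<in> edom (chi 0)"
    and x_init: "\<forall>\<omega>. x 0 \<omega> = x0"
    and eta0: "\<forall>i\<in>{1..m}. ereal (f i x0) + chi i x0 < ereal (etak 0 i) \<and> etak 0 i < eta i"
    and eta_step: "\<forall>k. \<forall>i\<in>{1..m}. etak k i < etak (Suc k) i \<and> etak (Suc k) i < eta i"
  (* algorithm, for every realization of the mini-batches *)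
    and G_rec: "\<forall>\<omega>. (\<forall>k. \<omega> k \<in> batches n b) \<longrightarrow> (\<forall>k.
        G k \<omega> = (if T dvd k then gradf 0 (x k \<omega>)
                  else (1 / real b) *\<^sub>R (\<Sum>j\<leftarrow>\<omega> k. gradF (x k \<omega>) (xi j) - gradF (x (k - 1) \<omega>) (xi j))
                       + G (k - 1) \<omega>))"
    and x_rec: "\<forall>\<omega>. (\<forall>k. \<omega> k \<in> batches n b) \<longrightarrow> (\<forall>k.
        is_constr_min m (lcsvrg_obj (G k \<omega>) \<gamma> (x k \<omega>) (chi 0))
          (lcsvrg_con f gradf Lc chi (x k \<omega>)) (etak k) (x (Suc k) \<omega>))"
    and lam_kkt: "\<forall>\<omega>. (\<forall>k. \<omega> k \<in> batches n b) \<longrightarrow> (\<forall>k.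
        (\<forall>i\<in>{1..m}. 0 \<le> lam (Suc k) \<omega> i) \<and>
        0 \<in> lag_set m
              (comp_subdiff (G k \<omega> + \<gamma> *\<^sub>R (x (Suc k) \<omega> - x k \<omega>)) (chi 0) (x (Suc k) \<omega>))
              (\<lambda>i. comp_subdiff (gradf i (x k \<omega>) + Lc i *\<^sub>R (x (Suc k) \<omega> - x k \<omega>)) (chi i) (x (Suc k) \<omega>))
              (lam (Suc k) \<omega>) \<and>
        (\<forall>i\<in>{1..m}. lam (Suc k) \<omega> i *
            (real_of_ereal (lcsvrg_con f gradf Lc chi (x k \<omega>) i (x (Suc k) \<omega>)) - etak k i) = 0))"
    and lam_bound: "\<forall>\<omega>. (\<forall>k. \<omega> k \<in> batches n b) \<longrightarrow> (\<forall>k. L2_set (lam (Suc k) \<omega>) {1..m} \<le> B)"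
  (* weights *)
    and alpha_nonneg: "\<forall>k. 0 \<le> \<alpha> k" and alpha_mono: "mono \<alpha>"
    and alpha_epoch: "\<forall>r j. 1 \<le> j \<and> j < T \<longrightarrow> \<alpha> (r * T + j) = \<alpha> (r * T)"
    and K_split: "K = r0 * T + j0" "j0 < T"
  shows "((\<Sum>k\<le>K. \<alpha> k * measure_pmf.expectation (batch_pmf n b K)
            (\<lambda>\<omega>. (norm_minus (lag_set m
                 (comp_subdiff (gradf 0 (x (Suc k) \<omega>)) (chi 0) (x (Suc k) \<omega>))
                 (\<lambda>i. comp_subdiff (gradf i (x (Suc k) \<omega>)) (chi i) (x (Suc k) \<omega>))
                 (lam (Suc k) \<omega>)))\<^sup>2))
         \<le> 8 / Lt * L0 * (\<gamma> + L0 + B * normL)\<^sup>2 * D\<^sup>2 * \<alpha> (r0 * T)) \<and>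
         ((\<Sum>k\<le>K. \<alpha> k * measure_pmf.expectation (batch_pmf n b K)
            (\<lambda>\<omega>. \<Sum>i\<in>{1..m}. lam (Suc k) \<omega> i *
                 \<bar>real_of_ereal (ereal (f i (x (Suc k) \<omega>)) + chi i (x (Suc k) \<omega>)) - eta i\<bar>))
         \<le> B * (\<Sum>k\<le>K. \<alpha> k * L2_set (\<lambda>i. eta i - etak k i) {1..m})
           + B / Lt * normL * L0 * D\<^sup>2 * \<alpha> (r0 * T))"
proof -
  have b_pos: "0 < b" using b_ge T_pos by linarith
  have Lpos: "\<forall>i\<in>{1..m}. 0 \<le> Lc i"
  proof
    fix i assume i: "i \<in> {1..m}"
    obtain e :: 'a where e: "e \<in> Basis" using nonempty_Basis by blast
    have "norm (gradf i e - gradf i 0) \<le> Lc i * norm (e - 0)" using f_lip i by blast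
    then show "0 \<le> Lc i" using e by (smt (verit) norm_Basis norm_ge_zero diff_zero mult_cancel_left1)
  qed
  have f_desc: "\<forall>i\<in>{1..m}. \<forall>y z. \<bar>f i y - f i z - gradf i z \<bullet> (y - z)\<bar> \<le> Lc i / 2 * (norm (y - z))\<^sup>2"
  proof (intro ballI allI)
    fix i y z assume i: "i \<in> {1..m}"
    have d: "\<And>y. (f i has_derivative (\<lambda>h. gradf i y \<bullet> h)) (at y)" using f_deriv i by blast
    have l: "\<And>y z. norm (gradf i y - gradf i z) \<le> Lc i * norm (y - z)" using f_lip i by blast
    show "\<bar>f i y - f i z - gradf i z \<bullet> (y - z)\<bar> \<le> Lc i / 2 * (norm (y - z))\<^sup>2" by (rule descent_two[OF d l])
  qed
  have g0_lip: "\<forall>y z. norm (gradf 0 y - gradf 0 z) \<le> L0 * norm (y - z)"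
  proof (intro allI)
    fix y z
    have "gradf 0 y - gradf 0 z = (1 / real n) *\<^sub>R (\<Sum>j<n. gradF y (xi j) - gradF z (xi j))"
      by (simp add: gradf0_def sum_subtractf scaleR_diff_right)
    then have "norm (gradf 0 y - gradf 0 z) \<le> (1 / real n) * (\<Sum>j<n. norm (gradF y (xi j) - gradF z (xi j)))"
      using norm_sum[of "\<lambda>j. gradF y (xi j) - gradF z (xi j)" "{..<n}"] by (simp add: divide_right_mono)
    also have "\<dots> \<le> (1 / real n) * (\<Sum>j<n. L0 * norm (y - z))"
      using F_lip by (intro mult_left_mono sum_mono) auto
    also have "\<dots> = L0 * norm (y - z)" using n_pos by simp
    finally show "norm (gradf 0 y - gradf 0 z) \<le> L0 * norm (y - z)" .
  qed
  have f0_der: "\<And>y. (f 0 has_derivative (\<lambda>h. gradf 0 y \<bullet> h)) (at y)"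
  proof -
    fix y
    have "((\<lambda>y. (\<Sum>j<n. F y (xi j)) / real n) has_derivative (\<lambda>h. (\<Sum>j<n. gradF y (xi j) \<bullet> h) / real n)) (at y)"
      using F_deriv n_pos by (auto intro!: derivative_eq_intros)
    moreover have "(\<lambda>h. (\<Sum>j<n. gradF y (xi j) \<bullet> h) / real n) = (\<lambda>h. gradf 0 y \<bullet> h)"
      by (auto simp: gradf0_def inner_sum_left fun_eq_iff)
    ultimately show "(f 0 has_derivative (\<lambda>h. gradf 0 y \<bullet> h)) (at y)" by (simp add: f0_def)
  qed
  have f0_desc: "\<forall>y z. \<bar>f 0 y - f 0 z - gradf 0 z \<bullet> (y - z)\<bar> \<le> L0 / 2 * (norm (y - z))\<^sup>2"
  proof (intro allI)
    fix y z
    have l: "\<And>y z. norm (gradf 0 y - gradf 0 z) \<le> L0 * norm (y - z)" using g0_lip by blast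
    show "\<bar>f 0 y - f 0 z - gradf 0 z \<bullet> (y - z)\<bar> \<le> L0 / 2 * (norm (y - z))\<^sup>2" by (rule descent_two[OF f0_der l])
  qed

  define V where "V = {w :: nat \<Rightarrow> nat list. \<forall>k. w k \<in> batches n b}"
  have ci: "\<forall>i\<in>{1..m}. proper_fun (chi i) \<and> edom (chi 0) \<subseteq> edom (chi i)" using chii by blast
  have ci2: "\<forall>i\<in>{1..m}. econvex (chi i) \<and> proper_fun (chi i) \<and> 0 \<le> Lc i" using chii Lpos by blast
  have xmin: "\<And>w k. w \<in> V \<Longrightarrow> is_constr_min m (lcsvrg_obj (G k w) \<gamma> (x k w) (chi 0))
          (lcsvrg_con f gradf Lc chi (x k w)) (etak k) (x (Suc k) w)"
    using x_rec unfolding V_def by blast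
  have kkt: "\<And>w k. w \<in> V \<Longrightarrow> (\<forall>i\<in>{1..m}. 0 \<le> lam (Suc k) w i) \<and>
        0 \<in> lag_set m
              (comp_subdiff (G k w + \<gamma> *\<^sub>R (x (Suc k) w - x k w)) (chi 0) (x (Suc k) w))
              (\<lambda>i. comp_subdiff (gradf i (x k w) + Lc i *\<^sub>R (x (Suc k) w - x k w)) (chi i) (x (Suc k) w))
              (lam (Suc k) w) \<and>
        (\<forall>i\<in>{1..m}. lam (Suc k) w i *
            (real_of_ereal (lcsvrg_con f gradf Lc chi (x k w) i (x (Suc k) w)) - etak k i) = 0)"
    using lam_kkt unfolding V_def by blast
  have lb: "\<And>w k. w \<in> V \<Longrightarrow> L2_set (lam (Suc k) w) {1..m} \<le> B"
    using lam_bound unfolding V_def by blast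
  note stepprems = chi0(1) ci Lpos f_desc f0_desc g0_lip f_lip
  have dom_feas: "\<And>w k. w \<in> V \<Longrightarrow> x k w \<in> edom (chi 0) \<and> (\<forall>i\<in>{1..m}. f i (x k w) + real_of_ereal (chi i (x k w)) \<le> etak k i)"
  proof -
    fix w k assume w: "w \<in> V"
    show "x k w \<in> edom (chi 0) \<and> (\<forall>i\<in>{1..m}. f i (x k w) + real_of_ereal (chi i (x k w)) \<le> etak k i)"
    proof (induction k)
      case 0
      have "\<forall>i\<in>{1..m}. f i x0 + real_of_ereal (chi i x0) \<le> etak 0 i"
      proof
        fix i assume i: "i \<in> {1..m}"
        have "chi i x0 = ereal (real_of_ereal (chi i x0))"
          using ci i x0_dom by (intro proper_fin) (auto simp: edom_def)
        then show "f i x0 + real_of_ereal (chi i x0) \<le> etak 0 i"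
          using eta0 i by (metis less_eq_ereal_def order_less_imp_le plus_ereal.simps(1) ereal_less_eq(3))
      qed
      then show ?case using x_init x0_dom by simp
    next
      case (Suc k)
      have a: "x (Suc k) w \<in> edom (chi 0)"
        by (rule xp_dom[OF stepprems _ _ xmin[OF w] kkt[OF w] lb[OF w]]) (use Suc in auto)
      have b: "\<forall>i\<in>{1..m}. f i (x (Suc k) w) + real_of_ereal (chi i (x (Suc k) w)) \<le> etak k i"
        by (rule xp_feas[OF stepprems _ _ xmin[OF w] kkt[OF w] lb[OF w]]) (use Suc in auto)
      have "\<forall>i\<in>{1..m}. f i (x (Suc k) w) + real_of_ereal (chi i (x (Suc k) w)) \<le> etak (Suc k) i"
        using b eta_step by (meson dual_order.trans order_less_imp_le)
      with a show ?case by simp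
    qed
  qed

  have Grec: "\<And>v k. v \<in> V \<Longrightarrow> G k v = (if T dvd k then gradf 0 (x k v)
                  else (1 / real b) *\<^sub>R (\<Sum>j\<leftarrow>v k. gradF (x k v) (xi j) - gradF (x (k - 1) v) (xi j))
                       + G (k - 1) v)"
  proof -
    fix v k assume "v \<in> V"
    then have "\<And>k. v k \<in> batches n b" by (simp add: V_def)
    from G_rec[rule_format, OF this] show "G k v = (if T dvd k then gradf 0 (x k v)
                  else (1 / real b) *\<^sub>R (\<Sum>j\<leftarrow>v k. gradF (x k v) (xi j) - gradF (x (k - 1) v) (xi j))
                       + G (k - 1) v)" .
  qed
  have adapt: "\<And>k. (\<forall>w\<in>V. \<forall>w'\<in>V. (\<forall>i<k. w i = w' i) \<longrightarrow> x k w = x k w') \<and>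
                 (\<forall>w\<in>V. \<forall>w'\<in>V. (\<forall>i<Suc k. w i = w' i) \<longrightarrow> G k w = G k w')"
  proof -
    fix k show "(\<forall>w\<in>V. \<forall>w'\<in>V. (\<forall>i<k. w i = w' i) \<longrightarrow> x k w = x k w') \<and>
                 (\<forall>w\<in>V. \<forall>w'\<in>V. (\<forall>i<Suc k. w i = w' i) \<longrightarrow> G k w = G k w')"
    proof (induction k)
      case 0
      have "\<forall>w\<in>V. G 0 w = gradf 0 x0"
      proof
        fix w assume w: "w \<in> V"
        show "G 0 w = gradf 0 x0" using x_init by (subst Grec[OF w]) simp
      qed
      then show ?case using x_init by (simp add: Ball_def)
    next
      case (Suc k)
      have IH1: "\<forall>w\<in>V. \<forall>w'\<in>V. (\<forall>i<k. w i = w' i) \<longrightarrow> x k w = x k w'" using Suc.IH by (rule conjunct1)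
      have IH2: "\<forall>w\<in>V. \<forall>w'\<in>V. (\<forall>i<Suc k. w i = w' i) \<longrightarrow> G k w = G k w'" using Suc.IH by (rule conjunct2)
      have X: "\<forall>w\<in>V. \<forall>w'\<in>V. (\<forall>i<Suc k. w i = w' i) \<longrightarrow> x (Suc k) w = x (Suc k) w'"
      proof (intro ballI impI)
        fix w w' assume w: "w \<in> V" and w': "w' \<in> V" and ag: "\<forall>i<Suc k. w i = w' i"
        have agk: "\<forall>i<k. w i = w' i" using ag by simp
        have e1: "x k w = x k w'" by (rule mp[OF bspec[OF bspec[OF IH1 w] w'] agk])
        have e2: "G k w = G k w'" by (rule mp[OF bspec[OF bspec[OF IH2 w] w'] ag])
        have m1: "is_constr_min m (lcsvrg_obj (G k w) \<gamma> (x k w) (chi 0))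
          (lcsvrg_con f gradf Lc chi (x k w)) (etak k) (x (Suc k) w)" by (rule xmin[OF w])
        have m2: "is_constr_min m (lcsvrg_obj (G k w) \<gamma> (x k w) (chi 0))
          (lcsvrg_con f gradf Lc chi (x k w)) (etak k) (x (Suc k) w')"
          using xmin[OF w', of k] unfolding e1 e2 .
        have fin: "chi 0 (x (Suc k) w) < \<infinity>" using dom_feas[OF w, of "Suc k"] by (simp add: edom_def)
        show "x (Suc k) w = x (Suc k) w'"
          by (rule constr_min_unique[OF gamma_pos chi0(2) chi0(1) ci2 m1 m2 fin])
      qed
      have "\<forall>w\<in>V. \<forall>w'\<in>V. (\<forall>i<Suc (Suc k). w i = w' i) \<longrightarrow> G (Suc k) w = G (Suc k) w'"
      proof (intro ballI impI)
        fix w w' assume w: "w \<in> V" and w': "w' \<in> V" and ag: "\<forall>i<Suc (Suc k). w i = w' i"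
        have ag1: "\<forall>i<Suc k. w i = w' i" using ag by simp
        have agk: "\<forall>i<k. w i = w' i" using ag by simp
        have e0: "x (Suc k) w = x (Suc k) w'" by (rule mp[OF bspec[OF bspec[OF X w] w'] ag1])
        have e1: "x k w = x k w'" by (rule mp[OF bspec[OF bspec[OF IH1 w] w'] agk])
        have e2: "G k w = G k w'" by (rule mp[OF bspec[OF bspec[OF IH2 w] w'] ag1])
        have e3: "w (Suc k) = w' (Suc k)" using ag by simp
        show "G (Suc k) w = G (Suc k) w'"
          unfolding Grec[OF w, of "Suc k"] Grec[OF w', of "Suc k"] diff_Suc_1 e0 e1 e2 e3 by (rule refl)
      qed
      with X show ?case by blast
    qed
  qed

  define P where "P = batch_pmf n b K"
  have finP: "finite (set_pmf P)" unfolding P_def by (rule finite_set_batch_pmf[OF n_pos])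
  have PV: "\<And>w. w \<in> set_pmf P \<Longrightarrow> w \<in> V"
    unfolding V_def P_def using batch_pmf_valid[OF n_pos] by blast
  define e where "e = (\<lambda>k w. (norm (G k w - gradf 0 (x k w)))\<^sup>2)"
  define d where "d = (\<lambda>k w. (norm (x (Suc k) w - x k w))\<^sup>2)"
  have e0: "\<And>k w. w \<in> V \<Longrightarrow> T dvd k \<Longrightarrow> e k w = 0"
    unfolding e_def by (subst Grec) auto
  have var: "\<And>k. k \<le> K \<Longrightarrow> \<not> T dvd k \<Longrightarrow>
      measure_pmf.expectation P (e k) \<le> measure_pmf.expectation P (e (k - 1)) + L0\<^sup>2 / real b * measure_pmf.expectation P (d (k - 1))"
  proof -
    fix k assume kK: "k \<le> K" and nd: "\<not> T dvd k"
    have k1: "1 \<le> k" using nd by (cases k) auto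
    have R: "measure_pmf.expectation P (e k)
       = measure_pmf.expectation P (\<lambda>w. (\<Sum>s\<in>batches n b. e k (w(k := s))) / real (card (batches n b)))"
      unfolding P_def by (rule resample[OF n_pos kK])
    have pt: "(\<Sum>s\<in>batches n b. e k (w(k := s))) / real (card (batches n b)) \<le> e (k - 1) w + L0\<^sup>2 / real b * d (k - 1) w"
      if wP: "w \<in> set_pmf P" for w
    proof -
      have w: "w \<in> V" using PV[OF wP] .
      define xk where "xk = x k w"
      define xk1 where "xk1 = x (k - 1) w"
      define a where "a = G (k - 1) w - gradf 0 xk1"
      define u where "u = (\<lambda>j. gradF xk (xi j) - gradF xk1 (xi j))"
      have gk: "gradf 0 xk = gradf 0 xk1 + (1 / real n) *\<^sub>R (\<Sum>j<n. u j)"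
        by (simp add: gradf0_def u_def sum_subtractf scaleR_diff_right)
      have ek: "e k (w(k := s)) = (norm (a + (1 / real b) *\<^sub>R (\<Sum>j\<leftarrow>s. u j) - (1 / real n) *\<^sub>R (\<Sum>j<n. u j)))\<^sup>2"
        if s: "s \<in> batches n b" for s
      proof -
        have ws: "w(k := s) \<in> V" using w s by (auto simp: V_def)
        have agk: "\<forall>i<k. w i = (w(k := s)) i" by simp
        have agk1: "\<forall>i<k - 1. w i = (w(k := s)) i" by auto
        have agk': "\<forall>i<Suc (k - 1). w i = (w(k := s)) i" using k1 by simp
        have x1: "x k (w(k := s)) = xk" unfolding xk_def
          by (rule mp[OF bspec[OF bspec[OF conjunct1[OF adapt[of k]] w] ws] agk, symmetric])
        have x2: "x (k - 1) (w(k := s)) = xk1" unfolding xk1_def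
          by (rule mp[OF bspec[OF bspec[OF conjunct1[OF adapt[of "k - 1"]] w] ws] agk1, symmetric])
        have g2: "G (k - 1) (w(k := s)) = G (k - 1) w"
          by (rule mp[OF bspec[OF bspec[OF conjunct2[OF adapt[of "k - 1"]] w] ws] agk', symmetric])
        have "G k (w(k := s)) = (1 / real b) *\<^sub>R (\<Sum>j\<leftarrow>s. u j) + G (k - 1) w"
          using nd by (subst Grec[OF ws]) (simp add: x1 x2[simplified] g2[simplified] u_def)
        then have "G k (w(k := s)) - gradf 0 (x k (w(k := s)))
            = a + (1 / real b) *\<^sub>R (\<Sum>j\<leftarrow>s. u j) - (1 / real n) *\<^sub>R (\<Sum>j<n. u j)"
          unfolding x1 gk a_def by (simp add: algebra_simps)
        then show ?thesis unfolding e_def by simp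
      qed
      have uc: "\<forall>j<n. norm (u j) \<le> L0 * norm (xk - xk1)"
        using F_lip by (auto simp: u_def)
      have "(\<Sum>s\<in>batches n b. e k (w(k := s))) / real (card (batches n b))
          = (\<Sum>s\<in>batches n b. (norm (a + (1 / real b) *\<^sub>R (\<Sum>j\<leftarrow>s. u j) - (1 / real n) *\<^sub>R (\<Sum>j<n. u j)))\<^sup>2) / real (card (batches n b))"
        using ek by simp
      also have "\<dots> \<le> (norm a)\<^sup>2 + (L0 * norm (xk - xk1))\<^sup>2 / real b"
        by (rule var_step[OF n_pos b_pos uc])
      also have "\<dots> = e (k - 1) w + L0\<^sup>2 / real b * d (k - 1) w"
        using k1 by (simp add: e_def d_def a_def xk_def xk1_def power_mult_distrib)
      finally show ?thesis .
    qed
    have "measure_pmf.expectation P (\<lambda>w. (\<Sum>s\<in>batches n b. e k (w(k := s))) / real (card (batches n b)))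
        \<le> measure_pmf.expectation P (\<lambda>w. e (k - 1) w + L0\<^sup>2 / real b * d (k - 1) w)"
      by (rule E_mono[OF finP pt])
    also have "\<dots> = measure_pmf.expectation P (e (k - 1)) + L0\<^sup>2 / real b * measure_pmf.expectation P (d (k - 1))"
      by (simp add: E_add[OF finP] E_cmult)
    finally show "measure_pmf.expectation P (e k) \<le> measure_pmf.expectation P (e (k - 1)) + L0\<^sup>2 / real b * measure_pmf.expectation P (d (k - 1))"
      unfolding R .
  qed

  have Ed0: "\<And>j. 0 \<le> measure_pmf.expectation P (d j)"
    by (rule E_nonneg[OF finP]) (simp add: d_def)
  have Ee0: "\<And>j. 0 \<le> measure_pmf.expectation P (e j)"
    by (rule E_nonneg[OF finP]) (simp add: e_def)
  have evar: "\<And>k. k \<le> K \<Longrightarrow> measure_pmf.expectation P (e k)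
        \<le> L0\<^sup>2 / real b * (\<Sum>j\<in>{T * (k div T)..<k}. measure_pmf.expectation P (d j))"
  proof -
    fix k show "k \<le> K \<Longrightarrow> measure_pmf.expectation P (e k)
        \<le> L0\<^sup>2 / real b * (\<Sum>j\<in>{T * (k div T)..<k}. measure_pmf.expectation P (d j))"
    proof (induction k)
      case 0
      have "measure_pmf.expectation P (e 0) \<le> measure_pmf.expectation P (\<lambda>_. 0)"
        by (rule E_mono[OF finP]) (use e0 PV in auto)
      then show ?case by (simp add: E_const)
    next
      case (Suc k)
      have rhs0: "0 \<le> L0\<^sup>2 / real b * (\<Sum>j\<in>{T * (Suc k div T)..<Suc k}. measure_pmf.expectation P (d j))"
        using Ed0 by (intro mult_nonneg_nonneg sum_nonneg) auto
      show ?case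
      proof (cases "T dvd Suc k")
        case True
        have "measure_pmf.expectation P (e (Suc k)) \<le> measure_pmf.expectation P (\<lambda>_. 0)"
          by (rule E_mono[OF finP]) (use e0 PV True in auto)
        then show ?thesis using rhs0 by (simp add: E_const)
      next
        case False
        have dv: "Suc k div T = k div T" using False by (simp add: div_Suc dvd_eq_mod_eq_0)
        have le: "T * (k div T) \<le> k" by (metis div_times_less_eq_dividend mult.commute)
        have set: "{T * (Suc k div T)..<Suc k} = insert k {T * (k div T)..<k}"
          using le unfolding dv by auto
        have "measure_pmf.expectation P (e (Suc k)) \<le> measure_pmf.expectation P (e k) + L0\<^sup>2 / real b * measure_pmf.expectation P (d k)"
          using var[OF Suc.prems False] by simp
        also have "\<dots> \<le> L0\<^sup>2 / real b * (\<Sum>j\<in>{T * (k div T)..<k}. measure_pmf.expectation P (d j)) + L0\<^sup>2 / real b * measure_pmf.expectation P (d k)"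
          using Suc.IH Suc.prems by simp
        also have "\<dots> = L0\<^sup>2 / real b * (\<Sum>j\<in>{T * (Suc k div T)..<Suc k}. measure_pmf.expectation P (d j))"
          unfolding set by (simp add: algebra_simps)
        finally show ?thesis .
      qed
    qed
  qed
  define Sd where "Sd = (\<Sum>k\<le>K. measure_pmf.expectation P (d k))"
  define Se where "Se = (\<Sum>k\<le>K. measure_pmf.expectation P (e k))"
  have Sd0: "0 \<le> Sd" unfolding Sd_def using Ed0 by (intro sum_nonneg) auto
  have SeSd: "Se \<le> L0\<^sup>2 / real b * real (T - 1) * Sd"
  proof -
    have "Se \<le> (\<Sum>k\<le>K. L0\<^sup>2 / real b * (\<Sum>j\<in>{T * (k div T)..<k}. measure_pmf.expectation P (d j)))"
      unfolding Se_def by (intro sum_mono evar) auto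
    also have "\<dots> = L0\<^sup>2 / real b * (\<Sum>k\<le>K. \<Sum>j\<in>{T * (k div T)..<k}. measure_pmf.expectation P (d j))"
      by (simp add: sum_distrib_left)
    also have "\<dots> \<le> L0\<^sup>2 / real b * (real (T - 1) * Sd)"
      unfolding Sd_def using Ed0 by (intro mult_left_mono epoch_count T_pos) auto
    finally show ?thesis by simp
  qed

  define psi where "psi = (\<lambda>y. f 0 y + real_of_ereal (chi 0 y))"
  define a where "a = (2 * \<gamma> - L0 - \<beta>) / 2"
  have desc: "\<And>w k. w \<in> V \<Longrightarrow> psi (x (Suc k) w) \<le> psi (x k w) - a * d k w + e k w / (2 * \<beta>)"
  proof -
    fix w k assume w: "w \<in> V"
    have dg: "f 0 (x (Suc k) w) + real_of_ereal (chi 0 (x (Suc k) w)) \<le> f 0 (x k w) + real_of_ereal (chi 0 (x k w))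
       - \<gamma> * (norm (x (Suc k) w - x k w))\<^sup>2 + L0 / 2 * (norm (x (Suc k) w - x k w))\<^sup>2
       + (gradf 0 (x k w) - G k w) \<bullet> (x (Suc k) w - x k w)"
      by (rule descent_G[OF stepprems _ _ xmin[OF w] kkt[OF w] lb[OF w]]) (use dom_feas[OF w] in auto)
    have "(gradf 0 (x k w) - G k w) \<bullet> (x (Suc k) w - x k w) \<le> norm (gradf 0 (x k w) - G k w) * norm (x (Suc k) w - x k w)"
      by (rule Cauchy_Schwarz_ineq2[THEN abs_le_D1])
    also have "\<dots> \<le> (norm (gradf 0 (x k w) - G k w))\<^sup>2 / (2 * \<beta>) + \<beta> / 2 * (norm (x (Suc k) w - x k w))\<^sup>2"
      by (rule amgm_beta[OF beta(1)])
    also have "\<dots> = e k w / (2 * \<beta>) + \<beta> / 2 * d k w"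
      by (simp add: e_def d_def norm_minus_commute)
    finally have cs: "(gradf 0 (x k w) - G k w) \<bullet> (x (Suc k) w - x k w) \<le> e k w / (2 * \<beta>) + \<beta> / 2 * d k w" .
    have "a * d k w = \<gamma> * d k w - L0 / 2 * d k w - \<beta> / 2 * d k w" by (simp add: a_def field_simps)
    then show "psi (x (Suc k) w) \<le> psi (x k w) - a * d k w + e k w / (2 * \<beta>)"
      using dg cs unfolding psi_def d_def by linarith
  qed
  have tele: "\<And>w N. w \<in> V \<Longrightarrow> psi (x (Suc N) w) + a * (\<Sum>k\<le>N. d k w) \<le> psi x0 + (\<Sum>k\<le>N. e k w) / (2 * \<beta>)"
  proof -
    fix w N assume w: "w \<in> V"
    show "psi (x (Suc N) w) + a * (\<Sum>k\<le>N. d k w) \<le> psi x0 + (\<Sum>k\<le>N. e k w) / (2 * \<beta>)"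
    proof (induction N)
      case 0 then show ?case using desc[OF w, of 0] x_init by simp
    next
      case (Suc N)
      have "psi (x (Suc (Suc N)) w) + a * (\<Sum>k\<le>Suc N. d k w)
          = psi (x (Suc (Suc N)) w) + a * d (Suc N) w + a * (\<Sum>k\<le>N. d k w)"
        by (simp add: algebra_simps)
      also have "\<dots> \<le> psi (x (Suc N) w) + e (Suc N) w / (2 * \<beta>) + a * (\<Sum>k\<le>N. d k w)"
        using desc[OF w, of "Suc N"] by linarith
      also have "\<dots> \<le> psi x0 + (\<Sum>k\<le>N. e k w) / (2 * \<beta>) + e (Suc N) w / (2 * \<beta>)"
        using Suc.IH by linarith
      also have "\<dots> = psi x0 + (\<Sum>k\<le>Suc N. e k w) / (2 * \<beta>)"
        by (simp add: add_divide_distrib)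
      finally show ?case .
    qed
  qed
  have ek_lt: "\<And>k. \<forall>i\<in>{1..m}. etak k i < eta i"
  proof -
    fix k show "\<forall>i\<in>{1..m}. etak k i < eta i"
      using eta0 eta_step by (cases k) auto
  qed
  have feasV: "\<And>w k. w \<in> V \<Longrightarrow> x k w \<in> Feas"
  proof -
    fix w k assume w: "w \<in> V"
    have dk: "x k w \<in> edom (chi 0)" using dom_feas[OF w] by blast
    have "\<forall>i\<in>{1..m}. ereal (f i (x k w)) + chi i (x k w) \<le> ereal (eta i)"
    proof
      fix i assume i: "i \<in> {1..m}"
      have fin: "chi i (x k w) = ereal (real_of_ereal (chi i (x k w)))"
        using ci i dk by (intro proper_fin) (auto simp: edom_def)
      have "f i (x k w) + real_of_ereal (chi i (x k w)) \<le> eta i"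
        using dom_feas[OF w, of k] ek_lt[of k] i by (meson dual_order.trans order_less_imp_le)
      then show "ereal (f i (x k w)) + chi i (x k w) \<le> ereal (eta i)" by (subst fin) simp
    qed
    with dk show "x k w \<in> Feas" unfolding Feas_def by blast
  qed
  have psfin: "psi0star = ereal (real_of_ereal psi0star)" using opt_finite by (cases psi0star) auto
  have psle: "\<And>y. y \<in> Feas \<Longrightarrow> real_of_ereal psi0star \<le> psi y"
  proof -
    fix y assume y: "y \<in> Feas"
    have "psi0star \<le> ereal (f 0 y) + chi 0 y" unfolding psi0star_def using y by (rule INF_lower)
    moreover have "chi 0 y = ereal (real_of_ereal (chi 0 y))"
      using y chi0(1) by (intro proper_fin) (auto simp: Feas_def edom_def)
    ultimately have "ereal (real_of_ereal psi0star) \<le> ereal (psi y)"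
      using psfin by (simp add: psi_def) (metis plus_ereal.simps(1))
    then show "real_of_ereal psi0star \<le> psi y" by simp
  qed
  define w0 where "w0 = (\<lambda>_::nat. replicate b (0::nat))"
  have w0V: "w0 \<in> V" unfolding V_def w0_def using batches_ne[OF n_pos] by simp
  define Delta0 where "Delta0 = psi x0 - real_of_ereal psi0star"
  have Delta0_nn: "0 \<le> Delta0" using psle[OF feasV[OF w0V, of 0]] x_init by (simp add: Delta0_def)
  have pw: "\<And>w. w \<in> set_pmf P \<Longrightarrow> a * (\<Sum>k\<le>K. d k w) \<le> Delta0 + (1 / (2 * \<beta>)) * (\<Sum>k\<le>K. e k w)"
  proof -
    fix w assume "w \<in> set_pmf P"
    then have w: "w \<in> V" by (rule PV)
    show "a * (\<Sum>k\<le>K. d k w) \<le> Delta0 + (1 / (2 * \<beta>)) * (\<Sum>k\<le>K. e k w)"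
      using tele[OF w, of K] psle[OF feasV[OF w, of "Suc K"]] unfolding Delta0_def by simp
  qed
  have "a * Sd \<le> Delta0 + (1 / (2 * \<beta>)) * Se"
  proof -
    have "measure_pmf.expectation P (\<lambda>w. a * (\<Sum>k\<le>K. d k w))
        \<le> measure_pmf.expectation P (\<lambda>w. Delta0 + (1 / (2 * \<beta>)) * (\<Sum>k\<le>K. e k w))"
      by (rule E_mono[OF finP pw])
    then show ?thesis
      by (simp add: E_add[OF finP] E_cmult E_const E_sum[OF finP] Sd_def Se_def)
  qed
  have LtSd: "Lt * Sd \<le> Delta0"
  proof -
    have "(1 / (2 * \<beta>)) * Se \<le> (1 / (2 * \<beta>)) * (L0\<^sup>2 / real b * real (T - 1) * Sd)"
      using SeSd beta(1) by (intro mult_left_mono) auto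
    moreover have "Lt * Sd = a * Sd - (1 / (2 * \<beta>)) * (L0\<^sup>2 / real b * real (T - 1) * Sd)"
      using T_pos by (simp add: Lt_def a_def of_nat_diff field_simps)
    ultimately show ?thesis using \<open>a * Sd \<le> Delta0 + (1 / (2 * \<beta>)) * Se\<close> by linarith
  qed
  have SdB: "Sd \<le> Delta0 / Lt" using LtSd Lt_pos by (simp add: field_simps)
  have D2: "L0 * D\<^sup>2 = Delta0"
  proof -
    have x0f: "chi 0 x0 = ereal (real_of_ereal (chi 0 x0))"
      using x0_dom chi0(1) by (intro proper_fin) (auto simp: edom_def)
    have "real_of_ereal (ereal (f 0 x0) + chi 0 x0) = psi x0" by (subst x0f) (simp add: psi_def)
    then have "D = sqrt (Delta0 / L0)" by (simp add: D_def Delta0_def)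
    then show ?thesis using Delta0_nn L0_pos by simp
  qed

  have nL0: "0 \<le> normL" unfolding normL_def by (rule L2_set_nonneg)
  have alK: "\<alpha> K = \<alpha> (r0 * T)"
  proof (cases "j0 = 0")
    case True then show ?thesis using K_split by simp
  next
    case False then show ?thesis using alpha_epoch K_split by auto
  qed
  have alle: "\<And>k. k \<le> K \<Longrightarrow> \<alpha> k \<le> \<alpha> (r0 * T)"
    using alpha_mono alK by (metis monoD)
  have al0: "0 \<le> \<alpha> (r0 * T)" using alpha_nonneg by blast
  have SdB': "\<alpha> (r0 * T) * Sd \<le> \<alpha> (r0 * T) * (Delta0 / Lt)"
    using SdB al0 by (rule mult_left_mono)
  define C where "C = \<gamma> + L0 + B * normL"
  define NM where "NM = (\<lambda>k \<omega>. (norm_minus (lag_set m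
                 (comp_subdiff (gradf 0 (x (Suc k) \<omega>)) (chi 0) (x (Suc k) \<omega>))
                 (\<lambda>i. comp_subdiff (gradf i (x (Suc k) \<omega>)) (chi i) (x (Suc k) \<omega>))
                 (lam (Suc k) \<omega>)))\<^sup>2)"
  have nmb: "\<And>w k. w \<in> V \<Longrightarrow> NM k w \<le> 2 * (\<gamma> + L0 + 2 * B * normL)\<^sup>2 * d k w + 2 * e k w"
  proof -
    fix w k assume w: "w \<in> V"
    have "NM k w \<le> 2 * (\<gamma> + L0 + 2 * B * L2_set Lc {1..m})\<^sup>2 * (norm (x (Suc k) w - x k w))\<^sup>2 + 2 * (norm (G k w - gradf 0 (x k w)))\<^sup>2"
      unfolding NM_def
      by (rule nm_bound[OF stepprems _ _ xmin[OF w] kkt[OF w] lb[OF w]])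
         (use dom_feas[OF w] gamma_pos L0_pos in auto)
    then show "NM k w \<le> 2 * (\<gamma> + L0 + 2 * B * normL)\<^sup>2 * d k w + 2 * e k w"
      by (simp add: normL_def d_def e_def)
  qed
  have ENM: "\<And>k. measure_pmf.expectation P (NM k) \<le> 2 * (\<gamma> + L0 + 2 * B * normL)\<^sup>2 * measure_pmf.expectation P (d k) + 2 * measure_pmf.expectation P (e k)"
  proof -
    fix k
    have "measure_pmf.expectation P (NM k) \<le> measure_pmf.expectation P (\<lambda>w. 2 * (\<gamma> + L0 + 2 * B * normL)\<^sup>2 * d k w + 2 * e k w)"
      by (rule E_mono[OF finP]) (use nmb PV in blast)
    then show "measure_pmf.expectation P (NM k) \<le> 2 * (\<gamma> + L0 + 2 * B * normL)\<^sup>2 * measure_pmf.expectation P (d k) + 2 * measure_pmf.expectation P (e k)"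
      by (simp add: E_add[OF finP] E_cmult)
  qed
  have cst: "2 * (\<gamma> + L0 + 2 * B * normL)\<^sup>2 + 2 * (L0\<^sup>2 / real b * real (T - 1)) \<le> 8 * C\<^sup>2"
  proof -
    have tb: "2 * real (T - 1) \<le> real b" using b_ge T_pos by (simp add: of_nat_diff)
    have "2 * (L0\<^sup>2 / real b * real (T - 1)) = L0\<^sup>2 * (2 * real (T - 1) / real b)" by simp
    also have "\<dots> \<le> L0\<^sup>2 * 1" using tb b_pos by (intro mult_left_mono) auto
    finally have l1: "2 * (L0\<^sup>2 / real b * real (T - 1)) \<le> L0\<^sup>2" by simp
    have l2: "L0\<^sup>2 \<le> (\<gamma> + L0)\<^sup>2" using gamma_pos L0_pos by (intro power_mono) auto
    have y0: "0 \<le> B * normL" using B_pos nL0 by simp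
    have x0: "0 \<le> \<gamma> + L0" using gamma_pos L0_pos by simp
    have "2 * (\<gamma> + L0 + 2 * (B * normL))\<^sup>2 + (\<gamma> + L0)\<^sup>2 \<le> 8 * (\<gamma> + L0 + B * normL)\<^sup>2"
      using cst_aux[OF x0 y0] by simp
    then show ?thesis using l1 l2 unfolding C_def by (simp add: mult.assoc)
  qed
  have claim1: "(\<Sum>k\<le>K. \<alpha> k * measure_pmf.expectation P (NM k)) \<le> 8 / Lt * L0 * C\<^sup>2 * D\<^sup>2 * \<alpha> (r0 * T)"
  proof -
    have "(\<Sum>k\<le>K. \<alpha> k * measure_pmf.expectation P (NM k))
        \<le> (\<Sum>k\<le>K. \<alpha> (r0 * T) * (2 * (\<gamma> + L0 + 2 * B * normL)\<^sup>2 * measure_pmf.expectation P (d k) + 2 * measure_pmf.expectation P (e k)))"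
    proof (rule sum_mono)
      fix k assume k: "k \<in> {..K}"
      have nn: "0 \<le> 2 * (\<gamma> + L0 + 2 * B * normL)\<^sup>2 * measure_pmf.expectation P (d k) + 2 * measure_pmf.expectation P (e k)"
        using Ed0[of k] Ee0[of k] by simp
      have "\<alpha> k * measure_pmf.expectation P (NM k) \<le> \<alpha> k * (2 * (\<gamma> + L0 + 2 * B * normL)\<^sup>2 * measure_pmf.expectation P (d k) + 2 * measure_pmf.expectation P (e k))"
        using ENM[of k] alpha_nonneg by (intro mult_left_mono) auto
      also have "\<dots> \<le> \<alpha> (r0 * T) * (2 * (\<gamma> + L0 + 2 * B * normL)\<^sup>2 * measure_pmf.expectation P (d k) + 2 * measure_pmf.expectation P (e k))"
        using alle[of k] k nn by (intro mult_right_mono) auto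
      finally show "\<alpha> k * measure_pmf.expectation P (NM k) \<le> \<alpha> (r0 * T) * (2 * (\<gamma> + L0 + 2 * B * normL)\<^sup>2 * measure_pmf.expectation P (d k) + 2 * measure_pmf.expectation P (e k))" .
    qed
    also have "\<dots> = \<alpha> (r0 * T) * (2 * (\<gamma> + L0 + 2 * B * normL)\<^sup>2 * Sd + 2 * Se)"
    proof -
      have "(\<Sum>k\<le>K. 2 * (\<gamma> + L0 + 2 * B * normL)\<^sup>2 * measure_pmf.expectation P (d k) + 2 * measure_pmf.expectation P (e k))
          = 2 * (\<gamma> + L0 + 2 * B * normL)\<^sup>2 * Sd + 2 * Se"
        by (simp add: Sd_def Se_def sum.distrib sum_distrib_left)
      then show ?thesis by (simp add: sum_distrib_left[symmetric])
    qed
    also have "\<dots> \<le> \<alpha> (r0 * T) * ((2 * (\<gamma> + L0 + 2 * B * normL)\<^sup>2 + 2 * (L0\<^sup>2 / real b * real (T - 1))) * Sd)"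
    proof -
      have "2 * (\<gamma> + L0 + 2 * B * normL)\<^sup>2 * Sd + 2 * Se \<le> 2 * (\<gamma> + L0 + 2 * B * normL)\<^sup>2 * Sd + 2 * (L0\<^sup>2 / real b * real (T - 1) * Sd)"
        using SeSd by linarith
      also have "\<dots> = (2 * (\<gamma> + L0 + 2 * B * normL)\<^sup>2 + 2 * (L0\<^sup>2 / real b * real (T - 1))) * Sd"
        by (simp add: algebra_simps)
      finally show ?thesis using al0 by (intro mult_left_mono) auto
    qed
    also have "\<dots> \<le> \<alpha> (r0 * T) * (8 * C\<^sup>2 * Sd)"
      using cst Sd0 al0 by (intro mult_left_mono mult_right_mono) auto
    also have "\<dots> = 8 * C\<^sup>2 * (\<alpha> (r0 * T) * Sd)" by simp
    also have "\<dots> \<le> 8 * C\<^sup>2 * (\<alpha> (r0 * T) * (Delta0 / Lt))"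
      by (rule mult_left_mono[OF SdB']) simp
    also have "\<dots> = 8 / Lt * L0 * C\<^sup>2 * D\<^sup>2 * \<alpha> (r0 * T)"
      unfolding D2[symmetric] by simp
    finally show ?thesis .
  qed
  define LT where "LT = (\<lambda>k \<omega>. \<Sum>i\<in>{1..m}. lam (Suc k) \<omega> i *
                 \<bar>real_of_ereal (ereal (f i (x (Suc k) \<omega>)) + chi i (x (Suc k) \<omega>)) - eta i\<bar>)"
  have ltb: "\<And>w k. w \<in> V \<Longrightarrow> LT k w \<le> B * L2_set (\<lambda>i. eta i - etak k i) {1..m} + B * normL * d k w"
  proof -
    fix w k assume w: "w \<in> V"
    show "LT k w \<le> B * L2_set (\<lambda>i. eta i - etak k i) {1..m} + B * normL * d k w"
      unfolding LT_def normL_def d_def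
      by (rule lam_term_bound[OF stepprems _ _ xmin[OF w] kkt[OF w] lb[OF w] ek_lt[of k]])
         (use dom_feas[OF w] in auto)
  qed
  have ELT: "\<And>k. measure_pmf.expectation P (LT k) \<le> B * L2_set (\<lambda>i. eta i - etak k i) {1..m} + B * normL * measure_pmf.expectation P (d k)"
  proof -
    fix k
    have "measure_pmf.expectation P (LT k) \<le> measure_pmf.expectation P (\<lambda>w. B * L2_set (\<lambda>i. eta i - etak k i) {1..m} + B * normL * d k w)"
      by (rule E_mono[OF finP]) (use ltb PV in blast)
    then show "measure_pmf.expectation P (LT k) \<le> B * L2_set (\<lambda>i. eta i - etak k i) {1..m} + B * normL * measure_pmf.expectation P (d k)"
      by (simp add: E_add[OF finP] E_cmult E_const)
  qed
  have claim2: "(\<Sum>k\<le>K. \<alpha> k * measure_pmf.expectation P (LT k))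
      \<le> B * (\<Sum>k\<le>K. \<alpha> k * L2_set (\<lambda>i. eta i - etak k i) {1..m}) + B / Lt * normL * L0 * D\<^sup>2 * \<alpha> (r0 * T)"
  proof -
    have "(\<Sum>k\<le>K. \<alpha> k * measure_pmf.expectation P (LT k))
        \<le> (\<Sum>k\<le>K. \<alpha> k * (B * L2_set (\<lambda>i. eta i - etak k i) {1..m}) + \<alpha> (r0 * T) * (B * normL * measure_pmf.expectation P (d k)))"
    proof (rule sum_mono)
      fix k assume k: "k \<in> {..K}"
      have nn: "0 \<le> B * normL * measure_pmf.expectation P (d k)"
        using B_pos nL0 Ed0[of k] by simp
      have "\<alpha> k * measure_pmf.expectation P (LT k) \<le> \<alpha> k * (B * L2_set (\<lambda>i. eta i - etak k i) {1..m} + B * normL * measure_pmf.expectation P (d k))"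
        using ELT[of k] alpha_nonneg by (intro mult_left_mono) auto
      also have "\<dots> = \<alpha> k * (B * L2_set (\<lambda>i. eta i - etak k i) {1..m}) + \<alpha> k * (B * normL * measure_pmf.expectation P (d k))"
        by (simp add: algebra_simps)
      also have "\<dots> \<le> \<alpha> k * (B * L2_set (\<lambda>i. eta i - etak k i) {1..m}) + \<alpha> (r0 * T) * (B * normL * measure_pmf.expectation P (d k))"
        using alle[of k] k nn by (intro add_left_mono mult_right_mono) auto
      finally show "\<alpha> k * measure_pmf.expectation P (LT k) \<le> \<alpha> k * (B * L2_set (\<lambda>i. eta i - etak k i) {1..m}) + \<alpha> (r0 * T) * (B * normL * measure_pmf.expectation P (d k))" .
    qed
    also have "\<dots> = B * (\<Sum>k\<le>K. \<alpha> k * L2_set (\<lambda>i. eta i - etak k i) {1..m}) + B * normL * (\<alpha> (r0 * T) * Sd)"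
      by (simp add: sum.distrib sum_distrib_left Sd_def algebra_simps)
    also have "\<dots> \<le> B * (\<Sum>k\<le>K. \<alpha> k * L2_set (\<lambda>i. eta i - etak k i) {1..m}) + B * normL * (\<alpha> (r0 * T) * (Delta0 / Lt))"
      using mult_left_mono[OF SdB', of "B * normL"] B_pos nL0 by (intro add_left_mono) auto
    also have "\<dots> = B * (\<Sum>k\<le>K. \<alpha> k * L2_set (\<lambda>i. eta i - etak k i) {1..m}) + B / Lt * normL * L0 * D\<^sup>2 * \<alpha> (r0 * T)"
      unfolding D2[symmetric] by simp
    finally show ?thesis .
  qed
  show ?thesis using claim1 claim2 unfolding NM_def LT_def C_def P_def by simp
qed

end
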